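(* Let $\alpha>0$ and let $D^{(\alpha)}_{\mathsf{in},n}=\sum_{(\xi,r)\in X^{(n)}}|\xi|^\alpha 1_{B^{\mathbb{T}_n}_{r}(o)}(\xi)$, where $|\xi|={\rm d}_{\mathbb{T}_n}(\xi,o)$. Then: (i) if $s>\alpha+d$, then $\lim_{n\to\infty}\mathbb{E}D^{(\alpha)}_{\mathsf{in},n}=d\kappa_d(\alpha+d)^{-1}\mathbb{E}R^{\alpha+d}$; (ii) if $s=\alpha+d$, then $\lim_{n\to\infty}(\log n)^{-1}\mathbb{E}D^{(\alpha)}_{\mathsf{in},n}=d\kappa_d\beta$; (iii) if $s<\alpha+d$, then $\lim_{n\to\infty}n^{s-\alpha-d}\mathbb{E}D^{(\alpha)}_{\mathsf{in},n}=\beta\int_{[-1/2,1/2]^d}|\eta|^{\alpha-s}\,{\rm d}\eta$. Here $\kappa_d$ is the volume of the unit ball in $\mathbb{R}^d$.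
   Context: Fix an integer $d\ge2$. For $n\ge1$, $\mathbb{T}_n$ is the torus obtained from $[-n/2,n/2]^d$ by identifying opposite faces, with toroidal distance ${\rm d}_{\mathbb{T}_n}$ and $B^{\mathbb{T}_n}_r(\xi)=\{\eta\in\mathbb{T}_n:{\rm d}_{\mathbb{T}_n}(\xi,\eta)\le r\}$. $R$ is a nonnegative random variable with absolutely continuous distribution such that $\lim_{h\to\infty}h^s\mathbb{P}(R>h)=\beta$ for some $\beta,s\in(0,\infty)$. $X^{(n)}$ is a homogeneous Poisson point process of intensity $1$ on $\mathbb{T}_n$, each point independently marked with a mark in $[0,\infty)$ distributed as $R$ (points written $(\xi,r)$). *)

theory Defs
  imports "HOL-Probability.Probability"
begin

text \<open>Torus T_n: represented by the fundamental domain [-n/2,n/2)^d in real^'d.\<close>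

definition torus_box :: "nat \<Rightarrow> (real^'d) set" where
  "torus_box n = {x. \<forall>i. - real n / 2 \<le> x $ i \<and> x $ i < real n / 2}"

definition torus_dist :: "nat \<Rightarrow> real^'d \<Rightarrow> real^'d \<Rightarrow> real" where
  "torus_dist n x y = (INF k \<in> {k::real^'d. \<forall>i. k $ i \<in> \<int>}. norm (x - y - real n *\<^sub>R k))"

definition torus_leb :: "nat \<Rightarrow> (real^'d) measure" where
  "torus_leb n = density lborel (indicator (torus_box n))"

definition poisson_process :: "'w measure \<Rightarrow> ('w \<Rightarrow> 'a set) \<Rightarrow> 'a measure \<Rightarrow> bool" where
  "poisson_process M X mu \<longleftrightarrow>
     prob_space M \<and> finite_measure mu \<and>
     (\<forall>\<omega>\<in>space M. finite (X \<omega>) \<and> X \<omega> \<subseteq> space mu) \<and>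
     (\<forall>B\<in>sets mu. (\<lambda>\<omega>. card (X \<omega> \<inter> B)) \<in> measurable M (count_space UNIV)) \<and>
     (\<forall>B\<in>sets mu. \<forall>k::nat.
        measure M {\<omega>\<in>space M. card (X \<omega> \<inter> B) = k}
          = measure mu B ^ k / fact k * exp (- measure mu B)) \<and>
     (\<forall>(Bs :: nat \<Rightarrow> 'a set) m. (\<forall>i<m. Bs i \<in> sets mu) \<longrightarrow> disjoint_family_on Bs {..<m} \<longrightarrow>
        prob_space.indep_vars M (\<lambda>_. count_space UNIV) (\<lambda>i \<omega>. card (X \<omega> \<inter> Bs i)) {..<m})"

definition D_in :: "real \<Rightarrow> nat \<Rightarrow> ((real^'d) \<times> real) set \<Rightarrow> real" where
  "D_in \<alpha> n P = (\<Sum>(\<xi>, r)\<in>P. torus_dist n \<xi> 0 powr \<alpha> * indicator {\<eta>. torus_dist n \<eta> 0 \<le> r} \<xi>)"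

end

theory Submission
  imports Defs "HOL-Probability.Probability"
begin


lemma td_nonneg: "torus_dist n x y \<ge> 0"
  unfolding torus_dist_def
  by (rule cINF_greatest) (auto intro!: exI[of _ 0])

lemma td_lower: "(\<forall>i. k $ i \<in> \<int>) \<Longrightarrow> torus_dist n x y \<le> norm (x - y - real n *\<^sub>R k)"
  unfolding torus_dist_def
  by (rule cINF_lower) (auto intro!: bdd_belowI[of _ 0])

lemma td_lip: "torus_dist n x 0 \<le> torus_dist n y 0 + dist x y"
proof -
  have "torus_dist n x 0 - dist x y \<le> torus_dist n y 0"
    unfolding torus_dist_def[of n y]
  proof (rule cINF_greatest)
    show "{k::real^'a. \<forall>i. k $ i \<in> \<int>} \<noteq> {}" by (auto intro!: exI[of _ 0])
  next
    fix k :: "real^'a" assume k: "k \<in> {k. \<forall>i. k $ i \<in> \<int>}"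
    have "torus_dist n x 0 \<le> norm (x - 0 - real n *\<^sub>R k)" using k by (intro td_lower) auto
    also have "\<dots> \<le> norm (y - 0 - real n *\<^sub>R k) + dist x y"
      using norm_triangle_ineq[of "x - y" "y - real n *\<^sub>R k"]
      by (simp add: dist_norm algebra_simps)
    finally show "torus_dist n x 0 - dist x y \<le> norm (y - 0 - real n *\<^sub>R k)" by simp
  qed
  then show ?thesis by simp
qed

lemma td_cont: "continuous_on UNIV (\<lambda>x. torus_dist n x 0)"
proof -
  have "1-lipschitz_on UNIV (\<lambda>x. torus_dist n x 0)"
  proof (rule lipschitz_onI)
    fix x y
    have "torus_dist n y 0 \<le> torus_dist n x 0 + dist x y" using td_lip[of n y x] by (simp add: dist_commute)
    then show "dist (torus_dist n x 0) (torus_dist n y 0) \<le> 1 * dist x y"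
      using td_lip[of n x y] by (simp add: dist_real_def abs_le_iff)
  qed simp
  then show ?thesis by (rule lipschitz_on_continuous_on)
qed

lemma td_meas[measurable]: "(\<lambda>x. torus_dist n x 0) \<in> borel_measurable borel"
  by (rule borel_measurable_continuous_onI[OF td_cont])

lemma comp_ineq:
  fixes a k :: real assumes "k \<in> \<int>" "- real n / 2 \<le> a" "a < real n / 2"
  shows "\<bar>a\<bar> \<le> \<bar>a - real n * k\<bar>"
proof -
  obtain m where m: "k = of_int m" using assms(1) Ints_cases by blast
  show ?thesis
  proof (cases "m = 0")
    case True then show ?thesis using m by simp
  next
    case False
    then consider "m \<ge> 1" | "m \<le> -1" by linarith
    then show ?thesis
    proof cases
      case 1
      then have "k \<ge> 1" using m by simp
      then have "real n * k \<ge> real n * 1" by (intro mult_left_mono) auto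
      then show ?thesis using assms by linarith
    next
      case 2
      then have "k \<le> -1" using m by simp
      then have "real n * k \<le> real n * (-1)" by (intro mult_left_mono) auto
      then show ?thesis using assms by linarith
    qed
  qed
qed

lemma td_box: "x \<in> torus_box n \<Longrightarrow> torus_dist n x 0 = norm x"
proof -
  assume x: "x \<in> torus_box n"
  have le: "norm x \<le> norm (x - 0 - real n *\<^sub>R k)" if k: "\<forall>i. k $ i \<in> \<int>" for k :: "real^'a"
    unfolding norm_vec_def
    by (rule L2_set_mono) (use x k comp_ineq in \<open>auto simp: torus_box_def\<close>)
  have "norm x \<le> torus_dist n x 0"
    unfolding torus_dist_def by (rule cINF_greatest) (auto intro!: exI[of _ 0] le[simplified])
  moreover have "torus_dist n x 0 \<le> norm x"
    using td_lower[of 0 n x 0] by simp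
  ultimately show ?thesis by simp
qed



lemma poisson_series: "(\<lambda>k. real k * (l ^ k / fact k * exp (- l))) sums (l::real)"
proof -
  have "(\<lambda>j. l * (l ^ j /\<^sub>R fact j) * exp (- l)) sums (l * exp l * exp (- l))"
    by (intro sums_mult sums_mult2 exp_converges)
  then have "(\<lambda>j. real (Suc j) * (l ^ Suc j / fact (Suc j) * exp (- l))) sums l"
    by (simp add: exp_minus field_simps del: of_nat_Suc)
  then show ?thesis by (subst (asm) sums_Suc_iff) simp
qed

lemma poisson_mean:
  assumes PP: "poisson_process M X mu" and B: "B \<in> sets mu"
  shows "(\<integral>\<^sup>+\<omega>. of_nat (card (X \<omega> \<inter> B)) \<partial>M) = emeasure mu B"
proof -
  define N where "N = (\<lambda>\<omega>. card (X \<omega> \<inter> B))"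
  define l where "l = measure mu B"
  interpret P: prob_space M using PP by (simp add: poisson_process_def)
  interpret F: finite_measure mu using PP by (simp add: poisson_process_def)
  have Nm: "N \<in> measurable M (count_space UNIV)" using PP B by (simp add: poisson_process_def N_def)
  have Nd: "measure M {\<omega>\<in>space M. N \<omega> = k} = l ^ k / fact k * exp (- l)" for k
    using PP B by (simp add: poisson_process_def N_def l_def)
  have Sk[measurable]: "{\<omega>\<in>space M. N \<omega> = k} \<in> sets M" for k
  proof -
    have "N -` {k} \<inter> space M \<in> sets M" using Nm by (simp add: measurable_count_space_eq2_countable)
    moreover have "N -` {k} \<inter> space M = {\<omega>\<in>space M. N \<omega> = k}" by auto
    ultimately show ?thesis by simp
  qed
  have eq: "(of_nat (N \<omega>)::ennreal) = (\<Sum>k. of_nat k * indicator {\<omega>\<in>space M. N \<omega> = k} \<omega>)" if "\<omega> \<in> space M" for \<omega>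
  proof -
    have e1: "(\<lambda>k. of_nat k * indicator {\<omega>\<in>space M. N \<omega> = k} \<omega>) = (\<lambda>k. if k = N \<omega> then of_nat k else (0::ennreal))"
      using that by (auto simp: indicator_def)
    show ?thesis unfolding e1 by (rule sums_single[THEN sums_unique])
  qed
  have "(\<integral>\<^sup>+\<omega>. of_nat (N \<omega>) \<partial>M) = (\<integral>\<^sup>+\<omega>. (\<Sum>k. of_nat k * indicator {\<omega>\<in>space M. N \<omega> = k} \<omega>) \<partial>M)"
    by (rule nn_integral_cong) (simp add: eq)
  also have "\<dots> = (\<Sum>k. \<integral>\<^sup>+\<omega>. of_nat k * indicator {\<omega>\<in>space M. N \<omega> = k} \<omega> \<partial>M)"
    by (rule nn_integral_suminf) (use Sk in auto)
  also have "\<dots> = (\<Sum>k. ennreal (real k * (l ^ k / fact k * exp (- l))))"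
    apply (rule suminf_cong)
    apply (simp add: nn_integral_cmult P.emeasure_eq_measure Nd ennreal_of_nat_eq_real_of_nat)
    apply (subst ennreal_mult[symmetric])
    by (auto simp: l_def)
  also have "\<dots> = ennreal l"
    by (rule suminf_ennreal_eq[OF _ poisson_series]) (simp add: l_def)
  finally show ?thesis by (simp add: N_def l_def F.emeasure_eq_measure)
qed

lemma campbell:
  assumes PP: "poisson_process M X mu" and f: "f \<in> borel_measurable mu"
  shows "(\<lambda>\<omega>. \<Sum>p\<in>X \<omega>. f p) \<in> borel_measurable M \<and>
         (\<integral>\<^sup>+\<omega>. (\<Sum>p\<in>X \<omega>. f p) \<partial>M) = integral\<^sup>N mu f"
  using f
proof (induction rule: borel_measurable_induct)
  case (cong f g)
  have "\<And>\<omega>. \<omega> \<in> space M \<Longrightarrow> (\<Sum>p\<in>X \<omega>. f p) = (\<Sum>p\<in>X \<omega>. g p)"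
    using PP cong(3) unfolding poisson_process_def by (intro sum.cong) auto
  moreover have "integral\<^sup>N mu f = integral\<^sup>N mu g" using cong(3) by (intro nn_integral_cong) auto
  ultimately show ?case using cong(4)
    by (metis (no_types, lifting) measurable_cong nn_integral_cong)
next
  case (set A)
  have fin: "\<And>\<omega>. \<omega> \<in> space M \<Longrightarrow> finite (X \<omega>)" using PP by (simp add: poisson_process_def)
  have eq: "\<And>\<omega>. \<omega> \<in> space M \<Longrightarrow> (\<Sum>p\<in>X \<omega>. indicator A p) = (of_nat (card (X \<omega> \<inter> A)) :: ennreal)"
  proof -
    fix \<omega> assume "\<omega> \<in> space M"
    then have "(\<Sum>p\<in>X \<omega>. indicator A p) = (\<Sum>p\<in>X \<omega> \<inter> A. 1::ennreal)"
      using fin[OF \<open>\<omega> \<in> space M\<close>] by (simp add: sum.If_cases indicator_def of_bool_def)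
    then show "(\<Sum>p\<in>X \<omega>. indicator A p) = (of_nat (card (X \<omega> \<inter> A)) :: ennreal)" by simp
  qed
  have Nm: "(\<lambda>\<omega>. card (X \<omega> \<inter> A)) \<in> measurable M (count_space UNIV)"
    using PP set by (simp add: poisson_process_def)
  have "(\<lambda>\<omega>. of_nat (card (X \<omega> \<inter> A)) :: ennreal) \<in> borel_measurable M"
    using measurable_compose[OF Nm, of "of_nat" borel] by simp
  then have m: "(\<lambda>\<omega>. \<Sum>p\<in>X \<omega>. indicator A p :: ennreal) \<in> borel_measurable M"
    using eq by (simp cong: measurable_cong)
  have "(\<integral>\<^sup>+\<omega>. (\<Sum>p\<in>X \<omega>. indicator A p) \<partial>M) = (\<integral>\<^sup>+\<omega>. of_nat (card (X \<omega> \<inter> A)) \<partial>M)"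
    using eq by (intro nn_integral_cong) simp
  also have "\<dots> = emeasure mu A" by (rule poisson_mean[OF PP set])
  finally show ?case using m set by simp
next
  case (mult u c)
  then show ?case
    by (simp add: sum_distrib_left[symmetric] nn_integral_cmult borel_measurable_times_ennreal)
next
  case (add u v)
  then show ?case
    by (simp add: sum.distrib nn_integral_add borel_measurable_add)
next
  case (seq U)
  have IH: "\<And>i. (\<lambda>\<omega>. \<Sum>p\<in>X \<omega>. U i p) \<in> borel_measurable M \<and> (\<integral>\<^sup>+\<omega>. (\<Sum>p\<in>X \<omega>. U i p) \<partial>M) = integral\<^sup>N mu (U i)"
    by (rule seq)
  have fin: "\<And>\<omega>. \<omega> \<in> space M \<Longrightarrow> finite (X \<omega>)" using PP by (simp add: poisson_process_def)
  have eq: "(\<Sum>p\<in>X \<omega>. (SUP i. U i) p) = (SUP i. \<Sum>p\<in>X \<omega>. U i p)" for \<omega>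
  proof -
    have "(\<Sum>p\<in>X \<omega>. (SUP i. U i) p) = (\<Sum>p\<in>X \<omega>. SUP i. U i p)"
      by (simp add: image_comp)
    also have "\<dots> = (SUP i. \<Sum>p\<in>X \<omega>. U i p)"
      using \<open>incseq U\<close> by (intro ennreal_SUP_sum[symmetric]) (auto simp: incseq_def le_fun_def)
    finally show ?thesis .
  qed
  have inc: "incseq (\<lambda>i \<omega>. \<Sum>p\<in>X \<omega>. U i p)"
    using \<open>incseq U\<close> by (auto simp: incseq_def le_fun_def intro!: sum_mono)
  have "(\<lambda>\<omega>. \<Sum>p\<in>X \<omega>. (SUP i. U i) p) \<in> borel_measurable M"
    unfolding eq using IH by (intro borel_measurable_SUP) auto
  moreover have "(\<integral>\<^sup>+\<omega>. (\<Sum>p\<in>X \<omega>. (SUP i. U i) p) \<partial>M) = integral\<^sup>N mu (SUP i. U i)"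
  proof -
    have "(\<integral>\<^sup>+\<omega>. (\<Sum>p\<in>X \<omega>. (SUP i. U i) p) \<partial>M) = (\<integral>\<^sup>+\<omega>. (SUP i. \<Sum>p\<in>X \<omega>. U i p) \<partial>M)"
      by (simp only: eq)
    also have "\<dots> = (SUP i. \<integral>\<^sup>+\<omega>. (\<Sum>p\<in>X \<omega>. U i p) \<partial>M)"
      using inc IH by (intro nn_integral_monotone_convergence_SUP) auto
    also have "\<dots> = (SUP i. integral\<^sup>N mu (U i))" using IH by simp
    also have "\<dots> = integral\<^sup>N mu (SUP i. U i)"
    proof -
      have "(SUP i. U i) = (\<lambda>x. SUP i. U i x)" by (rule ext) (simp add: image_comp)
      then show ?thesis
        using nn_integral_monotone_convergence_SUP[OF \<open>incseq U\<close>, of mu] seq(1) by simp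
    qed
    finally show ?thesis .
  qed
  moreover have SA: "\<Squnion> range U = (\<lambda>a. \<Squnion>x\<in>range U. x a)" by (rule ext, rule Sup_apply)
  ultimately show ?case by (simp only: SA)
qed



lemma torus_box_meas[measurable]: "torus_box n \<in> sets borel"
  unfolding torus_box_def by measurable

lemma expect_D:
  fixes Q :: "real measure" and M :: "'w measure" and X :: "'w \<Rightarrow> ((real^'d) \<times> real) set"
  assumes Qprob: "prob_space Q" and Qsets: "sets Q = sets borel"
    and PP: "poisson_process M X (torus_leb n \<Otimes>\<^sub>M Q)"
  shows "(\<integral>\<omega>. D_in \<alpha> n (X \<omega>) \<partial>M) =
     enn2real (\<integral>\<^sup>+ x. indicator (torus_box n :: (real^'d) set) x * ennreal (norm x powr \<alpha> * measure Q {norm x..}) \<partial>lborel)"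
proof -
  interpret Q: prob_space Q by fact
  define mu where "mu = (torus_leb n :: (real^'d) measure) \<Otimes>\<^sub>M Q"
  define f where "f = (\<lambda>(\<xi>::real^'d, r::real). torus_dist n \<xi> 0 powr \<alpha> * indicator {\<eta>. torus_dist n \<eta> 0 \<le> r} \<xi>)"
  have f_nonneg: "f p \<ge> 0" for p by (auto simp: f_def split: prod.splits)
  have sQ: "space Q = UNIV" using Qsets by (metis sets_eq_imp_space_eq space_borel)
  have sets_mu: "sets mu = sets (borel \<Otimes>\<^sub>M borel)"
    unfolding mu_def torus_leb_def by (intro sets_pair_measure_cong) (auto simp: Qsets)
  have f_eq: "f = (\<lambda>p. torus_dist n (fst p) 0 powr \<alpha> * indicator {p. torus_dist n (fst p) 0 \<le> snd p} p)"
    by (auto simp: f_def fun_eq_iff indicator_def)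
  have fm_borel: "f \<in> borel_measurable (borel \<Otimes>\<^sub>M borel)"
    unfolding f_eq by measurable
  have fm: "(\<lambda>p. ennreal (f p)) \<in> borel_measurable mu"
    using fm_borel by (simp add: measurable_cong_sets[OF sets_mu refl])
  have Deq: "D_in \<alpha> n P = (\<Sum>p\<in>P. f p)" for P unfolding D_in_def f_def by simp
  have camp: "(\<lambda>\<omega>. \<Sum>p\<in>X \<omega>. ennreal (f p)) \<in> borel_measurable M \<and>
         (\<integral>\<^sup>+\<omega>. (\<Sum>p\<in>X \<omega>. ennreal (f p)) \<partial>M) = (\<integral>\<^sup>+p. ennreal (f p) \<partial>mu)"
    using campbell[OF PP[folded mu_def] fm] by simp
  have se: "(\<Sum>p\<in>P. ennreal (f p)) = ennreal (D_in \<alpha> n P)" for P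
    unfolding Deq using f_nonneg by (simp add: sum_ennreal)
  have Dm: "(\<lambda>\<omega>. D_in \<alpha> n (X \<omega>)) \<in> borel_measurable M"
  proof -
    have "(\<lambda>\<omega>. enn2real (ennreal (D_in \<alpha> n (X \<omega>)))) \<in> borel_measurable M"
      using camp by (simp add: se borel_measurable_enn2real)
    moreover have "D_in \<alpha> n P \<ge> 0" for P :: "((real^'d) \<times> real) set" by (simp add: Deq f_nonneg sum_nonneg)
    ultimately show ?thesis by simp
  qed
  have "(\<integral>\<omega>. D_in \<alpha> n (X \<omega>) \<partial>M) = enn2real (\<integral>\<^sup>+\<omega>. ennreal (D_in \<alpha> n (X \<omega>)) \<partial>M)"
    using Dm by (intro integral_eq_nn_integral) (auto simp: Deq f_nonneg sum_nonneg)
  also have "(\<integral>\<^sup>+\<omega>. ennreal (D_in \<alpha> n (X \<omega>)) \<partial>M) = (\<integral>\<^sup>+p. ennreal (f p) \<partial>mu)"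
    using camp by (simp add: se)
  also have "\<dots> = (\<integral>\<^sup>+ x. \<integral>\<^sup>+ r. ennreal (f (x, r)) \<partial>Q \<partial>torus_leb n)"
    unfolding mu_def using fm unfolding mu_def by (rule Q.nn_integral_fst[symmetric])
  also have "\<dots> = (\<integral>\<^sup>+ x. indicator (torus_box n) x * (\<integral>\<^sup>+ r. ennreal (f (x, r)) \<partial>Q) \<partial>lborel)"
  proof -
    have fm2: "(\<lambda>p. ennreal (f p)) \<in> borel_measurable (borel \<Otimes>\<^sub>M Q)"
      using fm_borel by (simp add: measurable_cong_sets[OF sets_pair_measure_cong[OF refl Qsets] refl])
    show ?thesis unfolding torus_leb_def
      by (subst nn_integral_density) (auto intro!: Q.borel_measurable_nn_integral_fst fm2)
  qed
  also have "\<dots> = (\<integral>\<^sup>+ x. indicator (torus_box n :: (real^'d) set) x * ennreal (norm x powr \<alpha> * measure Q {norm x..}) \<partial>lborel)"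
  proof -
    have pw: "indicator (torus_box n) x * (\<integral>\<^sup>+ r. ennreal (f (x, r)) \<partial>Q) =
          indicator (torus_box n) x * ennreal (norm x powr \<alpha> * measure Q {norm x..})" for x :: "real^'d"
    proof (cases "x \<in> torus_box n")
      case True
      have "(\<lambda>r. ennreal (f (x, r))) = (\<lambda>r. ennreal (norm x powr \<alpha>) * indicator {norm x..} r)"
        using True by (auto simp: f_def td_box fun_eq_iff indicator_def)
      then have "(\<integral>\<^sup>+ r. ennreal (f (x, r)) \<partial>Q) = ennreal (norm x powr \<alpha>) * emeasure Q {norm x..}"
        using Qsets by (simp add: nn_integral_cmult_indicator)
      then show ?thesis
        by (simp add: Q.emeasure_eq_measure ennreal_mult)
    qed simp
    show ?thesis by (simp only: pw)
  qed
  finally show ?thesis .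
qed



definition wrad :: "nat \<Rightarrow> real \<Rightarrow> ennreal" where
  "wrad D t = indicator {0..} t * ennreal (real D * unit_ball_vol (real D) * t ^ (D - 1))"

lemma wrad_meas[measurable]: "wrad D \<in> borel_measurable borel"
  unfolding wrad_def by measurable

lemma wrad_lessThan:
  assumes D: "D \<ge> 1"
  shows "(\<integral>\<^sup>+t. wrad D t * indicator {..<a} t \<partial>lborel) = (if a \<le> 0 then 0 else ennreal (unit_ball_vol (real D) * a ^ D))"
proof (cases "a \<le> 0")
  case True
  have z: "wrad D t * indicator {..<a} t = 0" for t
    using True by (auto simp: wrad_def indicator_def)
  have "(\<integral>\<^sup>+t. wrad D t * indicator {..<a} t \<partial>lborel) = (\<integral>\<^sup>+t. 0 \<partial>(lborel::real measure))"
    by (rule nn_integral_cong) (rule z)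
  then show ?thesis using True by simp
next
  case False
  define k where "k = unit_ball_vol (real D)"
  have k: "k \<ge> 0" by (simp add: k_def)
  have "(\<integral>\<^sup>+t. wrad D t * indicator {..<a} t \<partial>lborel) =
        (\<integral>\<^sup>+t. ennreal (real D * k * t ^ (D - 1)) * indicator {0..a} t \<partial>lborel)"
  proof (rule nn_integral_cong_AE)
    show "AE t in lborel. wrad D t * indicator {..<a} t = ennreal (real D * k * t ^ (D - 1)) * indicator {0..a} t"
      using AE_lborel_singleton[of a]
      by eventually_elim (auto simp: wrad_def indicator_def k_def)
  qed
  also have "\<dots> = ennreal (k * a ^ D - k * 0 ^ D)"
  proof (rule nn_integral_FTC_Icc[where F="\<lambda>t. k * t ^ D"])
    show "(\<lambda>t. real D * k * t ^ (D - 1)) \<in> borel_measurable borel" by measurable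
    fix t :: real assume t: "t \<in> {0..a}"
    show "DERIV (\<lambda>t. k * t ^ D) t :> real D * k * t ^ (D - 1)"
      by (auto intro!: derivative_eq_intros)
    show "0 \<le> real D * k * t ^ (D - 1)" using t k by auto
  qed (use False in auto)
  also have "\<dots> = ennreal (k * a ^ D)" using D by (simp add: power_0_left)
  finally show ?thesis using False by (simp add: k_def)
qed

lemma distr_norm:
  "distr (lborel :: 'a::euclidean_space measure) borel norm = density lborel (wrad DIM('a))"
proof (rule measure_eqI_generator_eq_countable[where E="range lessThan" and \<Omega>=UNIV and A="range (\<lambda>n::nat. {..<real n})"])
  show "Int_stable (range lessThan :: real set set)"
  proof (clarsimp simp: Int_stable_def)
    fix a b :: real show "{..<a} \<inter> {..<b} \<in> range lessThan"
      by (rule image_eqI[of _ _ "min a b"]) auto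
  qed
  show "range lessThan \<subseteq> Pow (UNIV :: real set)" by auto
  have sb: "sets (borel :: real measure) = sigma_sets UNIV (range lessThan)"
    by (subst borel_Iio) simp
  show "sets (distr (lborel :: 'a measure) borel norm) = sigma_sets UNIV (range lessThan)"
    using sb by simp
  show "sets (density lborel (wrad DIM('a))) = sigma_sets UNIV (range lessThan)"
    using sb by simp
  have em: "emeasure (distr (lborel :: 'a measure) borel norm) {..<a} = (if a \<le> 0 then 0 else ennreal (unit_ball_vol (real DIM('a)) * a ^ DIM('a)))" for a
  proof -
    have "emeasure (distr (lborel :: 'a measure) borel norm) {..<a} = emeasure lborel (norm -` {..<a} \<inter> space lborel :: 'a set)"
      by (rule emeasure_distr) auto
    also have "norm -` {..<a} \<inter> space lborel = (ball 0 a :: 'a set)"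
      by (auto simp: ball_def)
    finally show ?thesis using emeasure_ball[of a "0::'a"] by (auto simp: ball_empty)
  qed
  show "emeasure (distr (lborel :: 'a measure) borel norm) X = emeasure (density lborel (wrad DIM('a))) X"
    if "X \<in> range lessThan" for X
  proof -
    obtain a where X: "X = {..<a}" using \<open>X \<in> range lessThan\<close> by auto
    have "emeasure (density lborel (wrad DIM('a))) X = (\<integral>\<^sup>+t. wrad DIM('a) t * indicator {..<a} t \<partial>lborel)"
      unfolding X by (subst emeasure_density) auto
    also have "\<dots> = (if a \<le> 0 then 0 else ennreal (unit_ball_vol (real DIM('a)) * a ^ DIM('a)))"
      by (rule wrad_lessThan) (simp add: DIM_positive Suc_leI)
    finally show ?thesis using em X by simp
  qed
  show "range (\<lambda>n::nat. {..<real n}) \<subseteq> range lessThan" by auto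
  show "\<Union> (range (\<lambda>n::nat. {..<real n})) = UNIV"
    using reals_Archimedean2 by auto
  show "countable (range (\<lambda>n::nat. {..<real n}))" by auto
  show "emeasure (distr (lborel :: 'a measure) borel norm) X \<noteq> \<infinity>" if "X \<in> range (\<lambda>n::nat. {..<real n})" for X
    using that em by (auto split: if_splits)
qed

lemma radial:
  fixes g :: "real \<Rightarrow> ennreal" assumes [measurable]: "g \<in> borel_measurable borel"
  shows "(\<integral>\<^sup>+x. g (norm (x::'a::euclidean_space)) \<partial>lborel) = (\<integral>\<^sup>+t. wrad DIM('a) t * g t \<partial>lborel)"
proof -
  have "(\<integral>\<^sup>+x. g (norm (x::'a)) \<partial>lborel) = (\<integral>\<^sup>+t. g t \<partial>distr (lborel :: 'a measure) borel norm)"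
    by (subst nn_integral_distr) auto
  also have "\<dots> = (\<integral>\<^sup>+t. wrad DIM('a) t * g t \<partial>lborel)"
    unfolding distr_norm by (subst nn_integral_density) auto
  finally show ?thesis .
qed



lemma nn_powr_0c:
  assumes "q > -1" "c \<ge> 0"
  shows "(\<integral>\<^sup>+t. ennreal (indicator {0..c} t * t powr q) \<partial>lborel) = ennreal (c powr (q+1) / (q+1))"
  using nn_integral_has_integral_lebesgue[OF _ has_integral_powr_from_0[OF assms]] by simp

lemma nn_powr_inf:
  assumes "e < -1" "a > 0"
  shows "(\<integral>\<^sup>+t. ennreal (indicator {a..} t * t powr e) \<partial>lborel) = ennreal (-(a powr (e+1)) / (e+1))"
  using nn_integral_has_integral_lebesgue[OF _ has_integral_powr_to_inf[OF assms]] assms by simp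

lemma wrad_powr:
  assumes D: "D \<ge> 1" and t: "t \<ge> 0"
  shows "wrad D t * ennreal (t powr a) = ennreal (real D * unit_ball_vol (real D) * t powr (a + real D - 1))"
proof (cases "t = 0")
  case True then show ?thesis by (simp add: wrad_def)
next
  case False
  then have tp: "t > 0" using t by simp
  have "t ^ (D - 1) * t powr a = t powr (a + real D - 1)"
    using tp D by (simp add: powr_realpow[symmetric] powr_add[symmetric] of_nat_diff algebra_simps)
  then show ?thesis using tp
    by (simp add: wrad_def ennreal_mult[symmetric] mult.assoc)
qed

lemma cball_sub_box:
  assumes "n \<ge> 1" shows "cball (0::real^'d) (real n / 4) \<subseteq> torus_box n"
proof
  fix x :: "real^'d" assume "x \<in> cball 0 (real n / 4)"
  then have "norm x \<le> real n / 4" by simp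
  then have h: "\<bar>x $ i\<bar> \<le> real n / 4" for i using component_le_norm_cart[of x i] by linarith
  have n1: "real n \<ge> 1" using assms by simp
  have "- real n / 2 \<le> x $ i \<and> x $ i < real n / 2" for i
    using h[of i] n1 abs_le_iff[of "x $ i" "real n / 4"] by linarith
  then show "x \<in> torus_box n" unfolding torus_box_def by blast
qed

lemma box_sub_cball:
  shows "torus_box n \<subseteq> cball (0::real^'d) (real CARD('d) * real n)"
proof
  fix x :: "real^'d" assume x: "x \<in> torus_box n"
  have "norm x \<le> (\<Sum>i\<in>UNIV. \<bar>x$i\<bar>)" by (rule norm_le_l1_cart)
  also have "\<dots> \<le> (\<Sum>i\<in>(UNIV::'d set). real n)"
  proof (rule sum_mono)
    fix i have "- real n / 2 \<le> x $ i" "x $ i < real n / 2" using x by (auto simp: torus_box_def)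
    then show "\<bar>x $ i\<bar> \<le> real n" by linarith
  qed
  finally show "x \<in> cball 0 (real CARD('d) * real n)" by simp
qed

locale tailQ =
  fixes Q :: "real measure" and \<alpha> \<beta> s :: real
  assumes Qprob: "prob_space Q" and Qsets: "sets Q = sets borel"
    and Qnonneg: "emeasure Q {..<0} = 0"
    and Qac: "absolutely_continuous lborel Q"
    and \<beta>pos: "\<beta> > 0" and spos: "s > 0"
    and tail: "((\<lambda>h. h powr s * measure Q {h<..}) \<longlongrightarrow> \<beta>) at_top"
    and \<alpha>pos: "\<alpha> > 0"
begin

interpretation Q: prob_space Q by (rule Qprob)

definition G :: "real \<Rightarrow> real" where "G t = measure Q {t..}"

lemma sQ: "space Q = UNIV" using Qsets by (metis sets_eq_imp_space_eq space_borel)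

lemma G_nonneg: "G t \<ge> 0" by (simp add: G_def)
lemma G_le1: "G t \<le> 1" by (simp add: G_def)

lemma G_eq: "G t = measure Q {t<..}"
proof -
  have "{t} \<in> null_sets lborel" by (simp add: null_sets_def)
  then have n: "{t} \<in> null_sets Q" using Qac by (auto simp: absolutely_continuous_def)
  have "{t..} = {t<..} \<union> {t}" by auto
  then show ?thesis unfolding G_def using measure_Un_null_set[OF _ n, of "{t<..}"] Qsets by simp
qed

lemma G_emeasure: "emeasure Q {t..} = ennreal (G t)"
  by (simp add: G_def Q.emeasure_eq_measure)

lemma G_mono: "x \<le> y \<Longrightarrow> G y \<le> G x"
  unfolding G_def using Qsets by (intro Q.finite_measure_mono) auto

lemma G_meas[measurable]: "G \<in> borel_measurable borel"
proof -
  have "mono (\<lambda>t. - G t)" by (auto simp: mono_def G_mono)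
  then have "(\<lambda>t. - G t) \<in> borel_measurable borel" by (rule borel_measurable_mono)
  then have "(\<lambda>t. - (- G t)) \<in> borel_measurable borel" by measurable
  then show ?thesis by simp
qed

lemma tailG: "((\<lambda>h. h powr s * G h) \<longlongrightarrow> \<beta>) at_top"
  using tail by (simp add: G_eq)

lemma G_bound: "\<exists>C>0. \<forall>t\<ge>0. t powr s * G t \<le> C"
proof -
  have "eventually (\<lambda>h. h powr s * G h < \<beta> + 1) at_top"
    using tailG by (rule order_tendstoD) simp
  then obtain T where T: "\<And>h. h \<ge> T \<Longrightarrow> h powr s * G h < \<beta> + 1"
    by (auto simp: eventually_at_top_linorder)
  define C where "C = max (\<beta> + 1) ((max T 0) powr s)"
  have "t powr s * G t \<le> C" if t: "t \<ge> 0" for t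
  proof (cases "t \<ge> T")
    case True then show ?thesis using T[of t] by (simp add: C_def)
  next
    case False
    have "t powr s * G t \<le> t powr s * 1" using G_le1 G_nonneg by (intro mult_left_mono) auto
    also have "\<dots> \<le> (max T 0) powr s" using False t spos powr_mono2[of s t "max T 0"] by auto
    finally show ?thesis by (simp add: C_def)
  qed
  moreover have "C > 0" using \<beta>pos by (simp add: C_def)
  ultimately show ?thesis by blast
qed

end



definition wr :: "nat \<Rightarrow> real \<Rightarrow> real" where
  "wr D t = indicator {0..} t * (real D * unit_ball_vol (real D) * t ^ (D - 1))"

lemma wr_nonneg: "wr D t \<ge> 0" by (auto simp: wr_def indicator_def)

lemma wr_meas[measurable]: "wr D \<in> borel_measurable borel" unfolding wr_def by measurable

lemma wrad_wr: "x \<ge> 0 \<Longrightarrow> wrad D t * ennreal x = ennreal (wr D t * x)"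
  by (simp add: wrad_def wr_def ennreal_mult indicator_def)

lemma wr_powr:
  assumes D: "D \<ge> 1" and t: "t \<ge> 0"
  shows "wr D t * t powr a = real D * unit_ball_vol (real D) * t powr (a + real D - 1)"
proof -
  have "ennreal (wr D t * t powr a) = ennreal (real D * unit_ball_vol (real D) * t powr (a + real D - 1))"
    using wrad_powr[OF assms, of a] wrad_wr[of "t powr a" D t] by simp
  then show ?thesis by (subst (asm) ennreal_inj) (auto simp: wr_nonneg)
qed

context tailQ
begin

interpretation Q: prob_space Q by (rule Qprob)

definition h :: "real \<Rightarrow> real" where "h t = t powr \<alpha> * G t"

lemma h_nonneg: "h t \<ge> 0" by (simp add: h_def G_nonneg)
lemma h_meas[measurable]: "h \<in> borel_measurable borel" unfolding h_def by measurable

lemma AE_Q_nonneg: "AE r in Q. r \<ge> 0"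
proof (rule AE_I')
  show "{..<0} \<in> null_sets Q" using Qnonneg Qsets by (auto simp: null_sets_def)
  show "{x \<in> space Q. \<not> 0 \<le> x} \<subseteq> {..<0}" by auto
qed

lemma radial_total:
  fixes D :: nat assumes D: "D \<ge> 1"
  shows "(\<integral>\<^sup>+t. ennreal (wr D t * h t) \<partial>lborel) =
    ennreal (real D * unit_ball_vol (real D) / (\<alpha> + real D)) * (\<integral>\<^sup>+r. ennreal (r powr (\<alpha> + real D)) \<partial>Q)"
proof -
  define c where "c = real D * unit_ball_vol (real D)"
  have c: "c \<ge> 0" by (simp add: c_def)
  interpret LQ: pair_sigma_finite lborel Q
    by (intro pair_sigma_finite.intro lborel.sigma_finite_measure_axioms Q.sigma_finite_measure_axioms)
  have setsLQ: "sets (lborel \<Otimes>\<^sub>M Q) = sets (borel \<Otimes>\<^sub>M borel)"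
    by (intro sets_pair_measure_cong) (auto simp: Qsets)
  have "(\<integral>\<^sup>+t. ennreal (wr D t * h t) \<partial>lborel) = (\<integral>\<^sup>+t. ennreal (wr D t * t powr \<alpha>) * ennreal (G t) \<partial>lborel)"
    by (intro nn_integral_cong) (simp add: h_def ennreal_mult[symmetric] wr_nonneg G_nonneg mult.assoc)
  also have "\<dots> = (\<integral>\<^sup>+t. \<integral>\<^sup>+r. ennreal (wr D t * t powr \<alpha>) * indicator {t..} r \<partial>Q \<partial>lborel)"
  proof (intro nn_integral_cong)
    fix t
    have "ennreal (G t) = (\<integral>\<^sup>+r. indicator {t..} r \<partial>Q)" using Qsets by (simp add: G_emeasure[symmetric])
    then show "ennreal (wr D t * t powr \<alpha>) * ennreal (G t) = (\<integral>\<^sup>+r. ennreal (wr D t * t powr \<alpha>) * indicator {t..} r \<partial>Q)"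
      using Qsets by (simp add: nn_integral_cmult)
  qed
  also have "\<dots> = (\<integral>\<^sup>+r. \<integral>\<^sup>+t. ennreal (wr D t * t powr \<alpha>) * indicator {t..} r \<partial>lborel \<partial>Q)"
  proof (rule LQ.Fubini'[symmetric])
    have "(\<lambda>p. ennreal (wr D (fst p) * fst p powr \<alpha>) * indicator {p. fst p \<le> snd p} p) \<in> borel_measurable (borel \<Otimes>\<^sub>M borel)"
      by measurable
    moreover have "(\<lambda>p. ennreal (wr D (fst p) * fst p powr \<alpha>) * indicator {p. fst p \<le> snd p} p) =
       case_prod (\<lambda>t r. ennreal (wr D t * t powr \<alpha>) * indicator {t..} r)"
      by (auto simp: fun_eq_iff indicator_def)
    ultimately show "case_prod (\<lambda>t r. ennreal (wr D t * t powr \<alpha>) * indicator {t..} r) \<in> borel_measurable (lborel \<Otimes>\<^sub>M Q)"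
      unfolding measurable_cong_sets[OF setsLQ refl] by simp
  qed
  also have "\<dots> = (\<integral>\<^sup>+r. ennreal (c / (\<alpha> + real D) * r powr (\<alpha> + real D)) \<partial>Q)"
  proof (rule nn_integral_cong_AE)
    show "AE r in Q. (\<integral>\<^sup>+t. ennreal (wr D t * t powr \<alpha>) * indicator {t..} r \<partial>lborel) = ennreal (c / (\<alpha> + real D) * r powr (\<alpha> + real D))"
      using AE_Q_nonneg
    proof eventually_elim
      case (elim r)
      have "(\<integral>\<^sup>+t. ennreal (wr D t * t powr \<alpha>) * indicator {t..} r \<partial>lborel) =
            (\<integral>\<^sup>+t. ennreal c * ennreal (indicator {0..r} t * t powr (\<alpha> + real D - 1)) \<partial>lborel)"
      proof (intro nn_integral_cong)
        fix t :: real
        show "ennreal (wr D t * t powr \<alpha>) * indicator {t..} r = ennreal c * ennreal (indicator {0..r} t * t powr (\<alpha> + real D - 1))"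
        proof (cases "t \<ge> 0")
          case True
          then show ?thesis using wr_powr[OF D True, of \<alpha>]
            by (auto simp: indicator_def c_def ennreal_mult[symmetric])
        next
          case False
          then show ?thesis by (auto simp: indicator_def wr_def)
        qed
      qed
      also have "\<dots> = ennreal c * ennreal (r powr (\<alpha> + real D - 1 + 1) / (\<alpha> + real D - 1 + 1))"
        using elim D \<alpha>pos by (subst nn_integral_cmult) (auto simp: nn_powr_0c)
      also have "\<dots> = ennreal (c / (\<alpha> + real D) * r powr (\<alpha> + real D))"
        using c elim \<alpha>pos by (simp add: ennreal_mult[symmetric])
      finally show ?case .
    qed
  qed
  also have "\<dots> = ennreal (c / (\<alpha> + real D)) * (\<integral>\<^sup>+r. ennreal (r powr (\<alpha> + real D)) \<partial>Q)"
  proof -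
    have m: "(\<lambda>r. ennreal (r powr (\<alpha> + real D))) \<in> borel_measurable Q"
      unfolding measurable_cong_sets[OF Qsets refl] by measurable
    have "(\<integral>\<^sup>+r. ennreal (c / (\<alpha> + real D) * r powr (\<alpha> + real D)) \<partial>Q) =
          (\<integral>\<^sup>+r. ennreal (c / (\<alpha> + real D)) * ennreal (r powr (\<alpha> + real D)) \<partial>Q)"
      using c \<alpha>pos by (intro nn_integral_cong) (simp add: ennreal_mult[symmetric])
    also have "\<dots> = ennreal (c / (\<alpha> + real D)) * (\<integral>\<^sup>+r. ennreal (r powr (\<alpha> + real D)) \<partial>Q)"
      using m by (rule nn_integral_cmult)
    finally show ?thesis .
  qed
  finally show ?thesis by (simp add: c_def)
qed

end


context tailQ
begin

interpretation Q: prob_space Q by (rule Qprob)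

lemma radial_finite:
  fixes D :: nat assumes D: "D \<ge> 1" and sD: "s > \<alpha> + real D"
  shows "(\<integral>\<^sup>+t. ennreal (wr D t * h t) \<partial>lborel) < \<infinity>"
proof -
  obtain C where C: "C > 0" "\<And>t. t \<ge> 0 \<Longrightarrow> t powr s * G t \<le> C" using G_bound by blast
  define c where "c = real D * unit_ball_vol (real D)"
  have c: "c \<ge> 0" by (simp add: c_def)
  define A where "A t = indicator {0..1} t * t powr (\<alpha> + real D - 1)" for t :: real
  define B where "B t = indicator {1..} t * t powr (\<alpha> + real D - 1 - s)" for t :: real
  have A0: "A t \<ge> 0" for t by (simp add: A_def)
  have B0: "B t \<ge> 0" for t by (simp add: B_def)
  have pw: "wr D t * h t \<le> c * A t + (c * C) * B t" for t
  proof (cases "t < 0")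
    case True then show ?thesis by (simp add: wr_def A_def B_def)
  next
    case False
    then have t: "t \<ge> 0" by simp
    show ?thesis
    proof (cases "t \<le> 1")
      case True
      have "h t \<le> t powr \<alpha>" using G_le1[of t] by (simp add: h_def mult_left_le)
      then have "wr D t * h t \<le> wr D t * t powr \<alpha>" by (intro mult_left_mono wr_nonneg)
      also have "\<dots> = c * A t" using wr_powr[OF D t, of \<alpha>] True t by (simp add: c_def A_def)
      finally show ?thesis using B0[of t] c C by (smt (verit) mult_nonneg_nonneg)
    next
      case False
      then have tp: "t > 0" by simp
      have "h t = t powr (\<alpha> - s) * (t powr s * G t)"
        using tp by (simp add: h_def powr_diff[symmetric] powr_add[symmetric] field_simps)
      also have "\<dots> \<le> t powr (\<alpha> - s) * C" using C(2)[OF t] by (intro mult_left_mono) auto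
      finally have "wr D t * h t \<le> wr D t * (t powr (\<alpha> - s) * C)" by (intro mult_left_mono wr_nonneg)
      also have "\<dots> = (wr D t * t powr (\<alpha> - s)) * C" by simp
      also have "\<dots> = c * C * B t" using wr_powr[OF D t, of "\<alpha> - s"] False by (simp add: c_def B_def indicator_def algebra_simps)
      finally show ?thesis using A0[of t] c by (smt (verit) mult_nonneg_nonneg)
    qed
  qed
  have "(\<integral>\<^sup>+t. ennreal (wr D t * h t) \<partial>lborel) \<le> (\<integral>\<^sup>+t. ennreal c * ennreal (A t) + ennreal (c * C) * ennreal (B t) \<partial>lborel)"
    using pw c C A0 B0 by (intro nn_integral_mono) (simp add: ennreal_mult[symmetric] ennreal_plus[symmetric] del: ennreal_plus)
  also have "\<dots> = ennreal c * (\<integral>\<^sup>+t. ennreal (A t) \<partial>lborel) + ennreal (c * C) * (\<integral>\<^sup>+t. ennreal (B t) \<partial>lborel)"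
    by (subst nn_integral_add) (auto simp: nn_integral_cmult A_def B_def)
  also have "(\<integral>\<^sup>+t. ennreal (A t) \<partial>lborel) = ennreal (1 powr (\<alpha> + real D - 1 + 1) / (\<alpha> + real D - 1 + 1))"
    unfolding A_def using \<alpha>pos D by (intro nn_powr_0c) auto
  also have "(\<integral>\<^sup>+t. ennreal (B t) \<partial>lborel) = ennreal (-(1 powr (\<alpha> + real D - 1 - s + 1)) / (\<alpha> + real D - 1 - s + 1))"
    unfolding B_def using sD by (intro nn_powr_inf) auto
  finally have le: "(\<integral>\<^sup>+t. ennreal (wr D t * h t) \<partial>lborel) \<le> ennreal c * ennreal (1 powr (\<alpha> + real D - 1 + 1) / (\<alpha> + real D - 1 + 1)) +
    ennreal (c * C) * ennreal (-(1 powr (\<alpha> + real D - 1 - s + 1)) / (\<alpha> + real D - 1 - s + 1))" .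
  moreover have "ennreal c * ennreal (1 powr (\<alpha> + real D - 1 + 1) / (\<alpha> + real D - 1 + 1)) +
    ennreal (c * C) * ennreal (-(1 powr (\<alpha> + real D - 1 - s + 1)) / (\<alpha> + real D - 1 - s + 1)) < \<infinity>"
    by (simp add: ennreal_mult_less_top)
  ultimately show ?thesis by (rule le_less_trans)
qed

lemma total_eq:
  "(\<integral>\<^sup>+x. ennreal (h (norm (x::real^'d))) \<partial>lborel) = (\<integral>\<^sup>+t. ennreal (wr CARD('d) t * h t) \<partial>lborel)"
proof -
  have "(\<integral>\<^sup>+x. ennreal (h (norm (x::real^'d))) \<partial>lborel) = (\<integral>\<^sup>+t. wrad DIM(real^'d) t * ennreal (h t) \<partial>lborel)"
    by (rule radial) measurable
  also have "\<dots> = (\<integral>\<^sup>+t. ennreal (wr CARD('d) t * h t) \<partial>lborel)"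
    by (simp add: wrad_wr h_nonneg)
  finally show ?thesis .
qed

lemma part1:
  assumes sD: "s > \<alpha> + real CARD('d)"
  shows "(\<lambda>n. enn2real (\<integral>\<^sup>+ x. indicator (torus_box n :: (real^'d) set) x * ennreal (norm x powr \<alpha> * measure Q {norm x..}) \<partial>lborel))
     \<longlonglongrightarrow> real CARD('d) * unit_ball_vol (real CARD('d)) / (\<alpha> + real CARD('d)) * (\<integral>r. r powr (\<alpha> + real CARD('d)) \<partial>Q)"
proof -
  define D where "D = CARD('d)"
  have D: "D \<ge> 1" by (simp add: D_def Suc_leI)
  define T where "T = (\<integral>\<^sup>+x. ennreal (h (norm (x::real^'d))) \<partial>lborel)"
  define K where "K = real D * unit_ball_vol (real D) / (\<alpha> + real D)"
  have K: "K \<ge> 0" using \<alpha>pos by (simp add: K_def)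
  define Mo where "Mo = (\<integral>\<^sup>+r. ennreal (r powr (\<alpha> + real D)) \<partial>Q)"
  have T1: "T = ennreal K * Mo" unfolding T_def total_eq K_def Mo_def D_def by (rule radial_total) (simp add: Suc_leI)
  have Tfin: "T < \<infinity>" unfolding T_def total_eq using radial_finite[of D] D sD by (simp add: D_def)
  have Ieq: "(\<lambda>x::real^'d. indicator (torus_box n) x * ennreal (norm x powr \<alpha> * measure Q {norm x..})) =
             (\<lambda>x. indicator (torus_box n) x * ennreal (h (norm x)))" for n
    by (simp add: h_def G_def)
  define I where "I n = (\<integral>\<^sup>+ x. indicator (torus_box n :: (real^'d) set) x * ennreal (h (norm x)) \<partial>lborel)" for n
  define L where "L n = (\<integral>\<^sup>+ x. indicator (cball (0::real^'d) (real n / 4)) x * ennreal (h (norm x)) \<partial>lborel)" for n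
  have LT: "L \<longlonglongrightarrow> T" unfolding L_def T_def
  proof (rule nn_integral_LIMSEQ)
    show "incseq (\<lambda>n x. indicator (cball (0::real^'d) (real n / 4)) x * ennreal (h (norm x)))"
      by (auto simp: incseq_def le_fun_def indicator_def intro!: mult_right_mono)
    show "(\<lambda>x. indicator (cball (0::real^'d) (real n / 4)) x * ennreal (h (norm x))) \<in> borel_measurable lborel" for n
    proof -
      note h_meas[measurable]
      have [measurable]: "cball (0::real^'d) (real n / 4) \<in> sets borel" by (simp add: borel_closed)
      show ?thesis by measurable
    qed
    fix x :: "real^'d"
    obtain N :: nat where N: "norm x * 4 \<le> real N" using real_arch_simple by blast
    have "eventually (\<lambda>n. indicator (cball (0::real^'d) (real n / 4)) x * ennreal (h (norm x)) = ennreal (h (norm x))) sequentially"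
      unfolding eventually_sequentially
      by (rule exI[of _ N]) (use N in \<open>auto simp: indicator_def\<close>)
    then show "(\<lambda>n. indicator (cball (0::real^'d) (real n / 4)) x * ennreal (h (norm x))) \<longlonglongrightarrow> ennreal (h (norm x))"
      by (rule tendsto_eventually)
  qed
  have IT: "I \<longlonglongrightarrow> T"
  proof (rule tendsto_sandwich[OF _ _ LT tendsto_const])
    show "eventually (\<lambda>n. L n \<le> I n) sequentially"
      unfolding eventually_sequentially
    proof (intro exI[of _ 1] allI impI)
      fix n :: nat assume n: "n \<ge> 1"
      show "L n \<le> I n" unfolding L_def I_def
        using cball_sub_box[OF n, where 'd='d]
        by (intro nn_integral_mono) (auto simp: indicator_def intro!: mult_right_mono)
    qed
    show "eventually (\<lambda>n. I n \<le> T) sequentially"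
      by (intro always_eventually allI) (auto simp: I_def T_def indicator_def intro!: nn_integral_mono)
  qed
  have Tr: "T = ennreal (enn2real T)" using Tfin by simp
  have "(\<lambda>n. enn2real (I n)) \<longlonglongrightarrow> enn2real T"
    using IT Tr by (intro tendsto_enn2real) auto
  moreover have "enn2real T = K * (\<integral>r. r powr (\<alpha> + real D) \<partial>Q)"
  proof -
    have "(\<integral>r. r powr (\<alpha> + real D) \<partial>Q) = enn2real Mo"
      unfolding Mo_def
      by (rule integral_eq_nn_integral) (auto simp: measurable_cong_sets[OF Qsets refl])
    then show ?thesis using K by (simp add: T1 enn2real_mult)
  qed
  ultimately show ?thesis by (simp add: Ieq I_def K_def D_def)
qed

end


lemma nn_scale:
  fixes f :: "real^'d \<Rightarrow> ennreal"
  assumes f[measurable]: "f \<in> borel_measurable borel" and c: "c > 0"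
  shows "(\<integral>\<^sup>+x. f x \<partial>lborel) = ennreal (c ^ CARD('d)) * (\<integral>\<^sup>+y. f (c *\<^sub>R y) \<partial>lborel)"
proof -
  have L: "(lborel :: (real^'d) measure) = density (distr lborel borel (\<lambda>x. 0 + c *\<^sub>R x)) (\<lambda>x. ennreal (\<bar>c\<bar> ^ DIM(real^'d)))"
    using c by (intro lborel_affine) auto
  have "(\<integral>\<^sup>+x. f x \<partial>lborel) = (\<integral>\<^sup>+x. f x \<partial>density (distr lborel borel (\<lambda>x. 0 + c *\<^sub>R x)) (\<lambda>x. ennreal (\<bar>c\<bar> ^ DIM(real^'d))))"
    by (subst L) (rule refl)
  also have "\<dots> = (\<integral>\<^sup>+x. ennreal (\<bar>c\<bar> ^ DIM(real^'d)) * f x \<partial>distr lborel borel (\<lambda>x. 0 + c *\<^sub>R x))"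
    by (subst nn_integral_density) auto
  also have "\<dots> = (\<integral>\<^sup>+y. ennreal (\<bar>c\<bar> ^ DIM(real^'d)) * f (0 + c *\<^sub>R y) \<partial>lborel)"
    by (subst nn_integral_distr) auto
  also have "\<dots> = ennreal (c ^ CARD('d)) * (\<integral>\<^sup>+y. f (c *\<^sub>R y) \<partial>lborel)"
    using c by (subst nn_integral_cmult) auto
  finally show ?thesis .
qed

lemma box_scale:
  assumes n: "n \<ge> 1" shows "(real n *\<^sub>R y \<in> torus_box n) = (y \<in> torus_box 1)"
proof -
  have np: "real n > 0" using n by simp
  have "(- real n / 2 \<le> real n * a \<and> real n * a < real n / 2) = (- 1 / 2 \<le> a \<and> a < 1 / 2)" for a :: real
  proof -
    have "- real n / 2 \<le> real n * a \<longleftrightarrow> real n * (- 1 / 2) \<le> real n * a" by simp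
    also have "\<dots> \<longleftrightarrow> - 1 / 2 \<le> a" using np by (rule mult_le_cancel_left_pos)
    finally have 1: "- real n / 2 \<le> real n * a \<longleftrightarrow> - 1 / 2 \<le> a" .
    have "real n * a < real n / 2 \<longleftrightarrow> real n * a < real n * (1 / 2)" by simp
    also have "\<dots> \<longleftrightarrow> a < 1 / 2" using np by (rule mult_less_cancel_left_pos)
    finally show ?thesis using 1 by simp
  qed
  then show ?thesis by (simp add: torus_box_def)
qed

lemma hyper_null: "{x::real^'d. x $ i = c} \<in> null_sets lborel"
proof -
  have "negligible {x::real^'d. axis i 1 \<bullet> x = c}"
    by (rule negligible_hyperplane) (simp add: axis_eq_0_iff)
  moreover have "{x::real^'d. axis i 1 \<bullet> x = c} = {x. x $ i = c}"
    by (simp add: cart_eq_inner_axis inner_commute)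
  ultimately have "{x::real^'d. x $ i = c} \<in> null_sets lebesgue"
    by (simp add: negligible_iff_null_sets)
  moreover have "{x::real^'d. x $ i = c} \<in> sets lborel" by measurable
  ultimately show ?thesis by (simp add: null_sets_completion_iff)
qed

lemma cball_powr_finite:
  fixes R e :: real assumes R: "R \<ge> 0" and e: "e + real CARD('d) > 0"
  shows "(\<integral>\<^sup>+y. indicator (cball (0::real^'d) R) y * ennreal (norm y powr e) \<partial>lborel) < \<infinity>"
proof -
  define D where "D = CARD('d)"
  have D: "D \<ge> 1" by (simp add: D_def Suc_leI)
  define c where "c = real D * unit_ball_vol (real D)"
  have "(\<integral>\<^sup>+y. indicator (cball (0::real^'d) R) y * ennreal (norm y powr e) \<partial>lborel) =
        (\<integral>\<^sup>+y. (\<lambda>t. indicator {..R} t * ennreal (t powr e)) (norm (y::real^'d)) \<partial>lborel)"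
    by (intro nn_integral_cong) (simp add: indicator_def)
  also have "\<dots> = (\<integral>\<^sup>+t. wrad D t * (indicator {..R} t * ennreal (t powr e)) \<partial>lborel)"
  proof -
    have m: "(\<lambda>t. indicator {..R} t * ennreal (t powr e)) \<in> borel_measurable borel" by measurable
    show ?thesis unfolding D_def using radial[OF m, where 'a="real^'d"] by simp
  qed
  also have "\<dots> = (\<integral>\<^sup>+t. ennreal c * ennreal (indicator {0..R} t * t powr (e + real D - 1)) \<partial>lborel)"
  proof (intro nn_integral_cong)
    fix t :: real
    show "wrad D t * (indicator {..R} t * ennreal (t powr e)) = ennreal c * ennreal (indicator {0..R} t * t powr (e + real D - 1))"
    proof (cases "t \<ge> 0")
      case True
      have "wrad D t * (indicator {..R} t * ennreal (t powr e)) = indicator {..R} t * (wrad D t * ennreal (t powr e))"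
        by (simp add: mult_ac)
      also have "\<dots> = indicator {..R} t * ennreal (c * t powr (e + real D - 1))"
        using wrad_powr[OF D True, of e] by (simp add: c_def)
      finally show ?thesis using True by (auto simp: indicator_def c_def ennreal_mult)
    qed (simp add: wrad_def)
  qed
  also have "\<dots> = ennreal c * ennreal (R powr (e + real D - 1 + 1) / (e + real D - 1 + 1))"
    using R e D by (subst nn_integral_cmult) (auto simp: nn_powr_0c D_def)
  also have "\<dots> < \<infinity>" by (simp add: ennreal_mult_less_top)
  finally show ?thesis .
qed



context tailQ
begin

interpretation Q: prob_space Q by (rule Qprob)

lemma scale_identity:
  assumes n: "n > 0" and t: "t > 0"
  shows "n powr (s - \<alpha>) * h (t * n) = t powr (\<alpha> - s) * ((t * n) powr s * G (t * n))"
proof -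
  have "n powr (s - \<alpha>) * h (t * n) = (n powr (s - \<alpha>) * n powr \<alpha>) * t powr \<alpha> * G (t * n)"
    using n t by (simp add: h_def powr_mult mult_ac)
  also have "n powr (s - \<alpha>) * n powr \<alpha> = n powr s" by (simp add: powr_add[symmetric])
  also have "t powr \<alpha> = t powr (\<alpha> - s) * t powr s" by (simp add: powr_add[symmetric])
  finally show ?thesis using n t by (simp add: powr_mult mult_ac)
qed

lemma part3:
  assumes sD: "s < \<alpha> + real CARD('d)"
  shows "(\<lambda>n. real n powr (s - \<alpha> - real CARD('d)) * enn2real (\<integral>\<^sup>+ x. indicator (torus_box n :: (real^'d) set) x * ennreal (norm x powr \<alpha> * measure Q {norm x..}) \<partial>lborel))
     \<longlonglongrightarrow> \<beta> * (\<integral>\<eta>. norm \<eta> powr (\<alpha> - s) \<partial>(restrict_space lborel (cbox (\<chi> i. - 1 / 2) (\<chi> i. 1 / 2) :: (real^'d) set)))"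
proof -
  define D where "D = CARD('d)"
  obtain C where C: "C > 0" "\<And>t. t \<ge> 0 \<Longrightarrow> t powr s * G t \<le> C" using G_bound by blast
  define B1 where "B1 = (torus_box 1 :: (real^'d) set)"
  have B1m[measurable]: "B1 \<in> sets borel" by (simp add: B1_def)
  note h_meas[measurable]
  define F where "F n y = indicator B1 y * (real n powr (s - \<alpha>) * h (norm y * real n))" for n and y :: "real^'d"
  define Fl where "Fl y = indicator B1 y * (\<beta> * norm y powr (\<alpha> - s))" for y :: "real^'d"
  define W where "W y = indicator B1 y * (C * norm y powr (\<alpha> - s))" for y :: "real^'d"
  have Fm[measurable]: "F n \<in> borel_measurable lborel" for n unfolding F_def by measurable
  have Flm[measurable]: "Fl \<in> borel_measurable lborel" unfolding Fl_def by measurable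
  have Wm[measurable]: "W \<in> borel_measurable lborel" unfolding W_def by measurable
  have F_nonneg: "F n y \<ge> 0" for n y by (simp add: F_def h_nonneg)
  have stepA: "real n powr (s - \<alpha> - real CARD('d)) * enn2real (\<integral>\<^sup>+ x. indicator (torus_box n :: (real^'d) set) x * ennreal (norm x powr \<alpha> * measure Q {norm x..}) \<partial>lborel)
      = (\<integral>y. F n y \<partial>lborel)" if n: "n \<ge> 1" for n
  proof -
    have np: "real n > 0" using n by simp
    define J where "J = (\<integral>\<^sup>+y. indicator B1 y * ennreal (h (norm y * real n)) \<partial>lborel)"
    have "(\<integral>\<^sup>+ x. indicator (torus_box n :: (real^'d) set) x * ennreal (norm x powr \<alpha> * measure Q {norm x..}) \<partial>lborel)
        = (\<integral>\<^sup>+ x. indicator (torus_box n :: (real^'d) set) x * ennreal (h (norm x)) \<partial>lborel)"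
      by (simp add: h_def G_def)
    also have "\<dots> = ennreal (real n ^ D) * (\<integral>\<^sup>+y. indicator (torus_box n :: (real^'d) set) (real n *\<^sub>R y) * ennreal (h (norm (real n *\<^sub>R y))) \<partial>lborel)"
      unfolding D_def by (rule nn_scale) (use np in auto)
    also have "(\<integral>\<^sup>+y. indicator (torus_box n :: (real^'d) set) (real n *\<^sub>R y) * ennreal (h (norm (real n *\<^sub>R y))) \<partial>lborel) = J"
    proof -
      have bs: "(real n *\<^sub>R y \<in> torus_box n) = (y \<in> B1)" for y :: "real^'d"
        using box_scale[OF n] by (simp add: B1_def)
      show ?thesis unfolding J_def by (intro nn_integral_cong) (simp add: indicator_def bs mult.commute)
    qed
    finally have I: "(\<integral>\<^sup>+ x. indicator (torus_box n :: (real^'d) set) x * ennreal (norm x powr \<alpha> * measure Q {norm x..}) \<partial>lborel)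
        = ennreal (real n ^ D) * J" .
    have "(\<integral>y. F n y \<partial>lborel) = enn2real (\<integral>\<^sup>+y. ennreal (F n y) \<partial>lborel)"
      by (rule integral_eq_nn_integral) (auto simp: F_nonneg)
    also have "(\<integral>\<^sup>+y. ennreal (F n y) \<partial>lborel) = (\<integral>\<^sup>+y. ennreal (real n powr (s - \<alpha>)) * (indicator B1 y * ennreal (h (norm y * real n))) \<partial>lborel)"
      by (intro nn_integral_cong) (simp add: F_def ennreal_mult h_nonneg indicator_def)
    also have "\<dots> = ennreal (real n powr (s - \<alpha>)) * J"
      unfolding J_def by (rule nn_integral_cmult) measurable
    finally have FJ: "(\<integral>y. F n y \<partial>lborel) = real n powr (s - \<alpha>) * enn2real J"
      by (simp add: enn2real_mult)
    have "real n powr (s - \<alpha> - real CARD('d)) * real n ^ D = real n powr (s - \<alpha>)"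
      using np by (simp add: D_def powr_realpow[symmetric] powr_add[symmetric])
    then show ?thesis unfolding I FJ by (simp add: enn2real_mult mult.assoc[symmetric])
  qed
  have Wint: "integrable lborel W"
  proof (rule integrableI_bounded)
    show "W \<in> borel_measurable lborel" by measurable
    have "(\<integral>\<^sup>+y. ennreal (norm (W y)) \<partial>lborel) \<le> (\<integral>\<^sup>+y. ennreal C * (indicator (cball (0::real^'d) (real D * 1)) y * ennreal (norm y powr (\<alpha> - s))) \<partial>lborel)"
    proof (intro nn_integral_mono)
      fix y :: "real^'d"
      have "y \<in> B1 \<Longrightarrow> y \<in> cball 0 (real D * 1)" using box_sub_cball[of 1, where 'd='d] by (auto simp: B1_def D_def)
      then show "ennreal (norm (W y)) \<le> ennreal C * (indicator (cball (0::real^'d) (real D * 1)) y * ennreal (norm y powr (\<alpha> - s)))"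
        using C by (auto simp: W_def indicator_def ennreal_mult)
    qed
    also have "\<dots> = ennreal C * (\<integral>\<^sup>+y. indicator (cball (0::real^'d) (real D * 1)) y * ennreal (norm y powr (\<alpha> - s)) \<partial>lborel)"
    proof (rule nn_integral_cmult)
      have [measurable]: "cball (0::real^'d) (real D * 1) \<in> sets borel" by (simp add: borel_closed)
      show "(\<lambda>y. indicator (cball (0::real^'d) (real D * 1)) y * ennreal (norm y powr (\<alpha> - s))) \<in> borel_measurable lborel"
        by measurable
    qed
    also have "\<dots> < \<infinity>"
      using cball_powr_finite[of "real D * 1" "\<alpha> - s", where 'd='d] sD by (simp add: D_def ennreal_mult_less_top)
    finally show "(\<integral>\<^sup>+y. ennreal (norm (W y)) \<partial>lborel) < \<infinity>" .
  qed
  have conv: "(\<lambda>n. F n y) \<longlonglongrightarrow> Fl y" for y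
  proof (cases "y \<in> B1 \<and> norm y > 0")
    case True
    define t where "t = norm y"
    have t: "t > 0" using True by (simp add: t_def)
    have lim1: "filterlim (\<lambda>n. t * real n) at_top sequentially"
      by (rule filterlim_tendsto_pos_mult_at_top[OF tendsto_const t filterlim_real_sequentially])
    have "((\<lambda>n. (t * real n) powr s * G (t * real n)) \<longlongrightarrow> \<beta>) sequentially"
      using filterlim_compose[OF tailG lim1] by simp
    then have "((\<lambda>n. t powr (\<alpha> - s) * ((t * real n) powr s * G (t * real n))) \<longlongrightarrow> t powr (\<alpha> - s) * \<beta>) sequentially"
      by (rule tendsto_mult_left)
    moreover have "eventually (\<lambda>n. t powr (\<alpha> - s) * ((t * real n) powr s * G (t * real n)) = F n y) sequentially"
      unfolding eventually_sequentially
      by (rule exI[of _ 1]) (use True t in \<open>auto simp: F_def t_def scale_identity\<close>)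
    ultimately show ?thesis using True
      by (subst (asm) tendsto_cong) (auto simp: Fl_def t_def mult.commute)
  next
    case False
    then have "F n y = 0" for n by (auto simp: F_def h_def)
    moreover have "Fl y = 0" using False by (auto simp: Fl_def)
    ultimately show ?thesis by simp
  qed
  have bound: "norm (F n y) \<le> W y" for n y
  proof (cases "y \<in> B1 \<and> norm y > 0 \<and> n > 0")
    case True
    define t where "t = norm y"
    have t: "t > 0" and np: "real n > 0" using True by (auto simp: t_def)
    have "F n y = t powr (\<alpha> - s) * ((t * real n) powr s * G (t * real n))"
      using True scale_identity[OF np t] by (simp add: F_def t_def)
    also have "\<dots> \<le> t powr (\<alpha> - s) * C" using C(2)[of "t * real n"] t np by (intro mult_left_mono) auto
    finally show ?thesis using True F_nonneg[of n y] by (simp add: W_def t_def mult.commute)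
  next
    case False
    then have "F n y = 0" by (auto simp: F_def h_def)
    moreover have "W y \<ge> 0" using C by (simp add: W_def)
    ultimately show ?thesis by simp
  qed
  have DC: "(\<lambda>n. \<integral>y. F n y \<partial>lborel) \<longlonglongrightarrow> (\<integral>y. Fl y \<partial>lborel)"
    using bound[unfolded real_norm_def] by (intro integral_dominated_convergence[OF Flm Fm Wint] AE_I2) (auto simp: conv)
  have stepC: "(\<integral>y. Fl y \<partial>lborel) = \<beta> * (\<integral>\<eta>. norm \<eta> powr (\<alpha> - s) \<partial>(restrict_space lborel (cbox (\<chi> i. - 1 / 2) (\<chi> i. 1 / 2) :: (real^'d) set)))"
  proof -
    define Cb where "Cb = (cbox (\<chi> i. - 1 / 2) (\<chi> i. 1 / 2) :: (real^'d) set)"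
    have "(\<integral>\<eta>. norm \<eta> powr (\<alpha> - s) \<partial>(restrict_space lborel Cb)) = (\<integral>\<eta>. indicator Cb \<eta> *\<^sub>R norm \<eta> powr (\<alpha> - s) \<partial>lborel)"
      by (rule integral_restrict_space) (simp add: Cb_def)
    also have "\<dots> = (\<integral>\<eta>. indicator B1 \<eta> * norm \<eta> powr (\<alpha> - s) \<partial>lborel)"
    proof (rule integral_cong_AE)
      show "(\<lambda>\<eta>. indicator Cb \<eta> *\<^sub>R norm \<eta> powr (\<alpha> - s)) \<in> borel_measurable lborel"
        by (simp add: Cb_def; measurable)
      show "(\<lambda>\<eta>. indicator B1 \<eta> * norm \<eta> powr (\<alpha> - s)) \<in> borel_measurable lborel" by measurable
      have "AE \<eta> in lborel. \<forall>i\<in>UNIV. \<eta> \<notin> {x::real^'d. x $ i = 1 / 2}"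
        by (intro AE_finite_allI AE_not_in hyper_null) auto
      then show "AE \<eta> in lborel. indicator Cb \<eta> *\<^sub>R norm \<eta> powr (\<alpha> - s) = indicator B1 \<eta> * norm \<eta> powr (\<alpha> - s)"
      proof eventually_elim
        case (elim \<eta>)
        have "\<eta> \<in> Cb \<longleftrightarrow> \<eta> \<in> B1"
          using elim by (auto simp: Cb_def B1_def torus_box_def mem_box_cart less_le)
        then show ?case by (simp add: indicator_def)
      qed
    qed
    finally show ?thesis
      by (simp add: Fl_def Cb_def mult.left_commute)
  qed
  have "(\<lambda>n. \<integral>y. F n y \<partial>lborel) \<longlonglongrightarrow> \<beta> * (\<integral>\<eta>. norm \<eta> powr (\<alpha> - s) \<partial>(restrict_space lborel (cbox (\<chi> i. - 1 / 2) (\<chi> i. 1 / 2) :: (real^'d) set)))"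
    using DC stepC by simp
  moreover have "eventually (\<lambda>n. (\<integral>y. F n y \<partial>lborel) = real n powr (s - \<alpha> - real CARD('d)) * enn2real (\<integral>\<^sup>+ x. indicator (torus_box n :: (real^'d) set) x * ennreal (norm x powr \<alpha> * measure Q {norm x..}) \<partial>lborel)) sequentially"
    unfolding eventually_sequentially by (rule exI[of _ 1]) (simp add: stepA)
  ultimately show ?thesis by (subst (asm) tendsto_cong) auto
qed

end


lemma inv_int:
  fixes q a b :: real
  assumes "1 \<le> a" "a \<le> b"
  shows "has_bochner_integral lborel (\<lambda>t. (q / t) * indicator {a..b} t) (q * ln b - q * ln a)"
proof -
  show ?thesis
  proof (rule has_bochner_integral_FTC_Icc_real[where F="\<lambda>t. q * ln t"])
    fix x assume x: "a \<le> x" "x \<le> b"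
    then have xp: "x > 0" using assms by simp
    show "((\<lambda>t. q * ln t) has_real_derivative q / x) (at x)"
      using xp by (auto intro!: derivative_eq_intros simp: field_simps)
    show "isCont (\<lambda>t. q / t) x" using xp by (auto intro!: continuous_intros)
  qed (use assms in auto)
qed

lemma kint_lemma:
  fixes k :: "real \<Rightarrow> real"
  assumes km[measurable]: "k \<in> borel_measurable borel" and knn: "\<And>t. 0 \<le> k t"
    and kb: "\<And>t. t \<ge> 1 \<Longrightarrow> k t \<le> B / t" and a: "1 \<le> a"
  shows "integrable lborel (\<lambda>t. k t * indicator {a..b} t)"
proof (cases "a \<le> b")
  case True
  have B: "B \<ge> 0" using kb[of 1] knn[of 1] by simp
  have "integrable lborel (\<lambda>t. (B / t) * indicator {a..b} t)"
    using inv_int[OF a True, of B] by (rule integrable.intros)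
  then show ?thesis
  proof (rule Bochner_Integration.integrable_bound)
    show "(\<lambda>t. k t * indicator {a..b} t) \<in> borel_measurable lborel" by measurable
    show "AE t in lborel. norm (k t * indicator {a..b} t) \<le> norm (B / t * indicator {a..b} t)"
      using kb knn a B by (intro AE_I2) (auto simp: indicator_def)
  qed
next
  case False
  then have "(\<lambda>t. k t * indicator {a..b} t) = (\<lambda>t. 0)" by (auto simp: fun_eq_iff indicator_def)
  then show ?thesis by simp
qed

lemma log_avg:
  fixes k :: "real \<Rightarrow> real"
  assumes km[measurable]: "k \<in> borel_measurable borel" and knn: "\<And>t. 0 \<le> k t"
    and kb: "\<And>t. t \<ge> 1 \<Longrightarrow> k t \<le> B / t"
    and lim: "((\<lambda>t. t * k t) \<longlongrightarrow> L) at_top"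
  shows "((\<lambda>R. (\<integral>t. k t * indicator {1..R} t \<partial>lborel) / ln R) \<longlongrightarrow> L) at_top"
proof -
  have B: "B \<ge> 0" using kb[of 1] knn[of 1] by simp
  have kint: "integrable lborel (\<lambda>t. k t * indicator {a..b} t)" if a: "1 \<le> a" for a b
  proof (cases "a \<le> b")
    case True
    have "integrable lborel (\<lambda>t. (B / t) * indicator {a..b} t)"
      using inv_int[OF a True, of B] by (rule integrable.intros)
    then show ?thesis
    proof (rule Bochner_Integration.integrable_bound)
      show "(\<lambda>t. k t * indicator {a..b} t) \<in> borel_measurable lborel" by measurable
      show "AE t in lborel. norm (k t * indicator {a..b} t) \<le> norm (B / t * indicator {a..b} t)"
        using kb knn a B by (intro AE_I2) (auto simp: indicator_def)
    qed
  next
    case False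
    then have "(\<lambda>t. k t * indicator {a..b} t) = (\<lambda>t. 0)" by (auto simp: fun_eq_iff indicator_def)
    then show ?thesis by simp
  qed
  show ?thesis
  proof (rule tendstoI)
    fix e :: real assume e: "e > 0"
    have "eventually (\<lambda>t. dist (t * k t) L < e / 2) at_top"
      using lim e by (intro tendstoD) auto
    then obtain T0 where T0: "\<And>t. t \<ge> T0 \<Longrightarrow> dist (t * k t) L < e / 2"
      by (auto simp: eventually_at_top_linorder)
    define T where "T = max T0 1"
    have T1: "T \<ge> 1" by (simp add: T_def)
    have TT: "t \<ge> T \<Longrightarrow> \<bar>t * k t - L\<bar> < e / 2" for t using T0[of t] by (simp add: T_def dist_real_def)
    define P where "P = (\<integral>t. k t * indicator {1..T} t \<partial>lborel)"
    have P0: "P \<ge> 0" unfolding P_def by (intro integral_nonneg_AE AE_I2) (simp add: knn)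
    define M where "M = 2 * (P + \<bar>L\<bar> * ln T) / e + 1"
    show "eventually (\<lambda>R. dist ((\<integral>t. k t * indicator {1..R} t \<partial>lborel) / ln R) L < e) at_top"
      unfolding eventually_at_top_linorder
    proof (intro exI[of _ "max T (exp M)"] allI impI)
      fix R assume R: "R \<ge> max T (exp M)"
      have RT: "R \<ge> T" using R by simp
      have Rp: "R > 0" using RT T1 by simp
      have lM: "ln R \<ge> M" using R Rp by (metis exp_le_cancel_iff exp_ln max.bounded_iff)
      have lTnn: "ln T \<ge> 0" using T1 by simp
      have lTl: "ln T \<le> ln R" using RT T1 by simp
      define l where "l = ln R"
      define lT where "lT = ln T"
      have lpos: "l > 0" using lM P0 e lTnn unfolding M_def l_def
        by (smt (verit, best) divide_nonneg_pos mult_nonneg_nonneg abs_ge_zero)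
      define Bd where "Bd = (\<integral>t. k t * indicator {T..R} t \<partial>lborel)"
      have split: "(\<integral>t. k t * indicator {1..R} t \<partial>lborel) = P + Bd"
      proof -
        have "(\<integral>t. k t * indicator {1..R} t \<partial>lborel) = (\<integral>t. k t * indicator {1..T} t + k t * indicator {T..R} t \<partial>lborel)"
        proof (rule integral_cong_AE)
          show "AE t in lborel. k t * indicator {1..R} t = k t * indicator {1..T} t + k t * indicator {T..R} t"
            using AE_lborel_singleton[of T] by eventually_elim (use RT T1 in \<open>auto simp: indicator_def\<close>)
        qed auto
        also have "\<dots> = P + Bd" unfolding P_def Bd_def
          using T1 by (intro Bochner_Integration.integral_add kint order_refl)
        finally show ?thesis .
      qed
      have low: "(L - e / 2) * l - (L - e / 2) * lT \<le> Bd"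
      proof -
        have "(L - e / 2) * l - (L - e / 2) * lT = (\<integral>t. ((L - e / 2) / t) * indicator {T..R} t \<partial>lborel)"
          using inv_int[OF T1 RT, of "L - e / 2"] by (simp add: has_bochner_integral_iff l_def lT_def)
        also have "\<dots> \<le> Bd" unfolding Bd_def
        proof (rule integral_mono)
          show "integrable lborel (\<lambda>t. (L - e / 2) / t * indicator {T..R} t)"
            using inv_int[OF T1 RT] by (rule integrable.intros)
          show "integrable lborel (\<lambda>t. k t * indicator {T..R} t)" using T1 by (intro kint)
          fix t
          show "(L - e / 2) / t * indicator {T..R} t \<le> k t * indicator {T..R} t"
          proof (cases "t \<in> {T..R}")
            case True
            then have tp: "t > 0" and "\<bar>t * k t - L\<bar> < e / 2" using T1 TT by auto
            then have "L - e / 2 \<le> t * k t" by linarith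
            then have "(L - e / 2) / t \<le> k t" using tp by (simp add: divide_le_eq mult.commute)
            then show ?thesis using True by simp
          qed simp
        qed
        finally show ?thesis .
      qed
      have up: "Bd \<le> (L + e / 2) * l - (L + e / 2) * lT"
      proof -
        have "Bd \<le> (\<integral>t. ((L + e / 2) / t) * indicator {T..R} t \<partial>lborel)" unfolding Bd_def
        proof (rule integral_mono)
          show "integrable lborel (\<lambda>t. (L + e / 2) / t * indicator {T..R} t)"
            using inv_int[OF T1 RT] by (rule integrable.intros)
          show "integrable lborel (\<lambda>t. k t * indicator {T..R} t)" using T1 by (intro kint)
          fix t
          show "k t * indicator {T..R} t \<le> (L + e / 2) / t * indicator {T..R} t"
          proof (cases "t \<in> {T..R}")
            case True
            then have tp: "t > 0" and "\<bar>t * k t - L\<bar> < e / 2" using T1 TT by auto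
            then have "t * k t \<le> L + e / 2" by linarith
            then have "k t \<le> (L + e / 2) / t" using tp by (simp add: le_divide_eq mult.commute)
            then show ?thesis using True by simp
          qed simp
        qed
        also have "\<dots> = (L + e / 2) * l - (L + e / 2) * lT"
          using inv_int[OF T1 RT, of "L + e / 2"] by (simp add: has_bochner_integral_iff l_def lT_def)
        finally show ?thesis .
      qed
      have big: "P + \<bar>L\<bar> * lT < e / 2 * l"
      proof -
        have "2 * (P + \<bar>L\<bar> * lT) / e < l" using lM unfolding M_def l_def lT_def by linarith
        then show ?thesis using e by (simp add: field_simps)
      qed
      have a1: "L * lT \<le> \<bar>L\<bar> * lT" "- (L * lT) \<le> \<bar>L\<bar> * lT"
        using lTnn unfolding lT_def
        by (auto intro: mult_right_mono) (metis abs_ge_minus_self minus_mult_left mult_right_mono)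
      have a2: "e * lT \<ge> 0" using e lTnn unfolding lT_def by simp
      have a3: "e * lT \<le> e * l" using e lTl unfolding lT_def l_def by simp
      have "\<bar>P + Bd - L * l\<bar> < e * l"
        using low up big a1 a2 a3 P0 by (simp add: algebra_simps abs_less_iff; linarith)
      then have "\<bar>(P + Bd) / l - L\<bar> < e"
        using lpos by (simp add: abs_less_iff field_simps)
      then show "dist ((\<integral>t. k t * indicator {1..R} t \<partial>lborel) / ln R) L < e"
        by (simp add: split dist_real_def l_def)
    qed
  qed
qed



context tailQ
begin

interpretation Q: prob_space Q by (rule Qprob)

lemma part2:
  assumes sD: "s = \<alpha> + real CARD('d)"
  shows "(\<lambda>n. enn2real (\<integral>\<^sup>+ x. indicator (torus_box n :: (real^'d) set) x * ennreal (norm x powr \<alpha> * measure Q {norm x..}) \<partial>lborel) / ln (real n))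
     \<longlonglongrightarrow> real CARD('d) * unit_ball_vol (real CARD('d)) * \<beta>"
proof -
  define D where "D = CARD('d)"
  have D: "D \<ge> 1" by (simp add: D_def Suc_leI)
  define c where "c = real D * unit_ball_vol (real D)"
  have c: "c \<ge> 0" by (simp add: c_def)
  obtain C where C: "C > 0" "\<And>t. t \<ge> 0 \<Longrightarrow> t powr s * G t \<le> C" using G_bound by blast
  define k where "k t = wr D t * h t" for t
  have km[measurable]: "k \<in> borel_measurable borel" unfolding k_def by measurable
  have knn: "k t \<ge> 0" for t by (simp add: k_def wr_nonneg h_nonneg)
  have kpos: "k t = c * t powr (s - 1) * G t" if t: "t \<ge> 0" for t
  proof -
    have "k t = (wr D t * t powr \<alpha>) * G t" by (simp add: k_def h_def mult.assoc)
    also have "wr D t * t powr \<alpha> = c * t powr (s - 1)" using wr_powr[OF D t, of \<alpha>] sD by (simp add: c_def D_def)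
    finally show ?thesis .
  qed
  have kdiv: "k t = c * (t powr s * G t) / t" if t: "t > 0" for t
    using kpos[of t] t by (simp add: powr_diff)
  have kb: "k t \<le> (c * C) / t" if t: "t \<ge> 1" for t
  proof -
    have "c * (t powr s * G t) \<le> c * C" using C(2)[of t] t c by (intro mult_left_mono) auto
    then show ?thesis using kdiv[of t] t by (simp add: divide_right_mono)
  qed
  have klim: "((\<lambda>t. t * k t) \<longlongrightarrow> c * \<beta>) at_top"
  proof -
    have "((\<lambda>t. c * (t powr s * G t)) \<longlongrightarrow> c * \<beta>) at_top" by (intro tendsto_mult_left tailG)
    moreover have "eventually (\<lambda>t. c * (t powr s * G t) = t * k t) at_top"
      unfolding eventually_at_top_linorder by (rule exI[of _ 1]) (simp add: kdiv)
    ultimately show ?thesis by (subst (asm) tendsto_cong) auto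
  qed
  define A where "A R = (\<integral>t. k t * indicator {1..R} t \<partial>lborel)" for R
  have Alim: "((\<lambda>R. A R / ln R) \<longlongrightarrow> c * \<beta>) at_top"
    unfolding A_def by (rule log_avg[OF km knn kb klim])
  have Aint: "integrable lborel (\<lambda>t. k t * indicator {1..R} t)" for R
    by (rule kint_lemma[OF km knn kb]) auto
  define K0 where "K0 = (\<integral>\<^sup>+t. ennreal (k t * indicator {..<1} t) \<partial>lborel)"
  have K0fin: "K0 < \<infinity>"
  proof -
    have "K0 \<le> (\<integral>\<^sup>+t. ennreal c * ennreal (indicator {0..1} t * t powr (s - 1)) \<partial>lborel)"
      unfolding K0_def
    proof (intro nn_integral_mono)
      fix t :: real
      show "ennreal (k t * indicator {..<1} t) \<le> ennreal c * ennreal (indicator {0..1} t * t powr (s - 1))"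
      proof (cases "t \<ge> 0")
        case True
        have "k t * indicator {..<1} t \<le> c * (indicator {0..1} t * t powr (s - 1))"
          using kpos[OF True] G_le1[of t] G_nonneg[of t] c True
          by (auto simp: indicator_def mult_left_le)
        then show ?thesis using c by (simp add: ennreal_mult[symmetric] ennreal_leI)
      next
        case False
        then show ?thesis by (simp add: k_def wr_def)
      qed
    qed
    also have "\<dots> = ennreal c * ennreal (1 powr (s - 1 + 1) / (s - 1 + 1))"
      using spos by (subst nn_integral_cmult) (auto simp: nn_powr_0c)
    also have "\<dots> < \<infinity>" by (simp add: ennreal_mult_less_top)
    finally show ?thesis .
  qed
  define K0r where "K0r = enn2real K0"
  have K0e: "K0 = ennreal K0r" using K0fin by (simp add: K0r_def)
  have K0r_nn: "K0r \<ge> 0" by (simp add: K0r_def)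
  have A_nn: "A R \<ge> 0" for R unfolding A_def by (intro integral_nonneg_AE AE_I2) (simp add: knn)
  define Ke where "Ke R = (\<integral>\<^sup>+ x. indicator (cball (0::real^'d) R) x * ennreal (h (norm x)) \<partial>lborel)" for R
  have Ke_eq: "Ke R = ennreal (K0r + A R)" if R: "R \<ge> 1" for R
  proof -
    have m: "(\<lambda>t. indicator {..R} t * ennreal (h t)) \<in> borel_measurable borel" by measurable
    have "Ke R = (\<integral>\<^sup>+x. (\<lambda>t. indicator {..R} t * ennreal (h t)) (norm (x::real^'d)) \<partial>lborel)"
      unfolding Ke_def by (intro nn_integral_cong) (simp add: indicator_def)
    also have "\<dots> = (\<integral>\<^sup>+t. wrad D t * (indicator {..R} t * ennreal (h t)) \<partial>lborel)"
      unfolding D_def using radial[OF m, where 'a="real^'d"] by simp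
    also have "\<dots> = (\<integral>\<^sup>+t. ennreal (k t * indicator {..<1} t) + ennreal (k t * indicator {1..R} t) \<partial>lborel)"
    proof (intro nn_integral_cong)
      fix t :: real
      have "wrad D t * (indicator {..R} t * ennreal (h t)) = indicator {..R} t * (wrad D t * ennreal (h t))"
        by (simp add: mult_ac)
      also have "\<dots> = indicator {..R} t * ennreal (k t)" by (simp add: wrad_wr h_nonneg k_def)
      also have "\<dots> = ennreal (k t * indicator {..<1} t) + ennreal (k t * indicator {1..R} t)"
        using R knn[of t] by (auto simp: indicator_def)
      finally show "wrad D t * (indicator {..R} t * ennreal (h t)) = ennreal (k t * indicator {..<1} t) + ennreal (k t * indicator {1..R} t)" .
    qed
    also have "\<dots> = K0 + (\<integral>\<^sup>+t. ennreal (k t * indicator {1..R} t) \<partial>lborel)"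
      unfolding K0_def by (rule nn_integral_add) auto
    also have "(\<integral>\<^sup>+t. ennreal (k t * indicator {1..R} t) \<partial>lborel) = ennreal (A R)"
      unfolding A_def by (rule nn_integral_eq_integral[OF Aint]) (simp add: knn)
    also have "K0 + ennreal (A R) = ennreal (K0r + A R)"
      unfolding K0e using ennreal_plus[of K0r "A R"] K0r_nn A_nn[of R] by simp
    finally show ?thesis .
  qed
  have KRlim: "((\<lambda>R. enn2real (Ke R) / ln R) \<longlongrightarrow> c * \<beta>) at_top"
  proof -
    have "((\<lambda>R. K0r / ln R + A R / ln R) \<longlongrightarrow> 0 + c * \<beta>) at_top"
      by (intro tendsto_add Alim tendsto_divide_0[OF tendsto_const] filterlim_at_top_imp_at_infinity ln_at_top)
    moreover have "eventually (\<lambda>R. K0r / ln R + A R / ln R = enn2real (Ke R) / ln R) at_top"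
      unfolding eventually_at_top_linorder
      by (rule exI[of _ 1]) (simp add: Ke_eq K0r_nn A_nn add_divide_distrib del: ennreal_plus)
    ultimately show ?thesis by (subst (asm) tendsto_cong) auto
  qed
  define I where "I n = (\<integral>\<^sup>+ x. indicator (torus_box n :: (real^'d) set) x * ennreal (norm x powr \<alpha> * measure Q {norm x..}) \<partial>lborel)" for n
  have Ieq: "I n = (\<integral>\<^sup>+ x. indicator (torus_box n :: (real^'d) set) x * ennreal (h (norm x)) \<partial>lborel)" for n
    by (simp add: I_def h_def G_def)
  have low: "Ke (real n / 4) \<le> I n" if "n \<ge> 1" for n
    unfolding Ieq Ke_def using cball_sub_box[OF that, where 'd='d]
    by (intro nn_integral_mono) (auto simp: indicator_def intro!: mult_right_mono)
  have upp: "I n \<le> Ke (real D * real n)" for n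
    unfolding Ieq Ke_def using box_sub_cball[of n, where 'd='d]
    by (intro nn_integral_mono) (auto simp: indicator_def D_def intro!: mult_right_mono)
  have Dp: "real D > 0" using D by simp
  have f1: "filterlim (\<lambda>n. real n / 4) at_top sequentially"
  proof -
    have "filterlim (\<lambda>n. (1/4) * real n) at_top sequentially"
      by (rule filterlim_tendsto_pos_mult_at_top[OF tendsto_const _ filterlim_real_sequentially]) simp
    moreover have "(\<lambda>n::nat. (1/4) * real n) = (\<lambda>n. real n / 4)" by auto
    ultimately show ?thesis by simp
  qed
  have f2: "filterlim (\<lambda>n. real D * real n) at_top sequentially"
    by (rule filterlim_tendsto_pos_mult_at_top[OF tendsto_const Dp filterlim_real_sequentially])
  have lr1: "(\<lambda>n. ln (real n / 4) / ln (real n)) \<longlonglongrightarrow> 1"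
  proof -
    have "(\<lambda>n. 1 - ln 4 / ln (real n)) \<longlonglongrightarrow> 1 - 0"
      by (intro tendsto_diff tendsto_const tendsto_divide_0[OF tendsto_const] filterlim_at_top_imp_at_infinity
          filterlim_compose[OF ln_at_top filterlim_real_sequentially])
    moreover have "eventually (\<lambda>n. 1 - ln 4 / ln (real n) = ln (real n / 4) / ln (real n)) sequentially"
      unfolding eventually_sequentially
      by (rule exI[of _ 2]) (auto simp: ln_div field_simps)
    ultimately show ?thesis by (subst (asm) tendsto_cong) auto
  qed
  have lr2: "(\<lambda>n. ln (real D * real n) / ln (real n)) \<longlonglongrightarrow> 1"
  proof -
    have "(\<lambda>n. ln (real D) / ln (real n) + 1) \<longlonglongrightarrow> 0 + 1"
      by (intro tendsto_add tendsto_const tendsto_divide_0[OF tendsto_const] filterlim_at_top_imp_at_infinity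
          filterlim_compose[OF ln_at_top filterlim_real_sequentially])
    moreover have "eventually (\<lambda>n. ln (real D) / ln (real n) + 1 = ln (real D * real n) / ln (real n)) sequentially"
      unfolding eventually_sequentially
      by (rule exI[of _ 2]) (use Dp in \<open>auto simp: ln_mult field_simps\<close>)
    ultimately show ?thesis by (subst (asm) tendsto_cong) auto
  qed
  have L1: "(\<lambda>n. enn2real (Ke (real n / 4)) / ln (real n / 4) * (ln (real n / 4) / ln (real n))) \<longlonglongrightarrow> c * \<beta> * 1"
    by (intro tendsto_mult lr1 filterlim_compose[OF KRlim f1])
  have L2: "(\<lambda>n. enn2real (Ke (real D * real n)) / ln (real D * real n) * (ln (real D * real n) / ln (real n))) \<longlonglongrightarrow> c * \<beta> * 1"
    by (intro tendsto_mult lr2 filterlim_compose[OF KRlim f2])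
  have "(\<lambda>n. enn2real (I n) / ln (real n)) \<longlonglongrightarrow> c * \<beta> * 1"
  proof (rule tendsto_sandwich[OF _ _ L1 L2])
    show "eventually (\<lambda>n. enn2real (Ke (real n / 4)) / ln (real n / 4) * (ln (real n / 4) / ln (real n)) \<le> enn2real (I n) / ln (real n)) sequentially"
      unfolding eventually_sequentially
    proof (intro exI[of _ 5] allI impI)
      fix n :: nat assume n: "n \<ge> 5"
      have R1: "real n / 4 \<ge> 1" using n by simp
      have lpos: "ln (real n / 4) > 0" using n by simp
      have "enn2real (Ke (real n / 4)) \<le> enn2real (I n)"
      proof (rule enn2real_mono)
        show "Ke (real n / 4) \<le> I n" using n by (intro low) auto
        have "I n \<le> Ke (real D * real n)" by (rule upp)
        also have "\<dots> < top"
        proof -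
          have DN: "1 \<le> real D * real n" using mult_mono[of 1 "real D" 1 "real n"] D n by simp
          show ?thesis by (subst Ke_eq[OF DN]) auto
        qed
        finally show "I n < top" .
      qed
      moreover have "ln (real n) > 0" using n by simp
      ultimately show "enn2real (Ke (real n / 4)) / ln (real n / 4) * (ln (real n / 4) / ln (real n)) \<le> enn2real (I n) / ln (real n)"
        using lpos by (simp add: divide_right_mono)
    qed
    show "eventually (\<lambda>n. enn2real (I n) / ln (real n) \<le> enn2real (Ke (real D * real n)) / ln (real D * real n) * (ln (real D * real n) / ln (real n))) sequentially"
      unfolding eventually_sequentially
    proof (intro exI[of _ 2] allI impI)
      fix n :: nat assume n: "n \<ge> 2"
      have R1: "real D * real n \<ge> 1" using mult_mono[of 1 "real D" 1 "real n"] D n by simp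
      have R2: "real D * real n > 1" using mult_mono[of 1 "real D" 2 "real n"] D n by simp
      have lpos: "ln (real D * real n) > 0" using R2 by simp
      have "enn2real (I n) \<le> enn2real (Ke (real D * real n))"
        using upp[of n] R1 by (intro enn2real_mono) (auto simp: Ke_eq)
      moreover have "ln (real n) > 0" using n by simp
      ultimately show "enn2real (I n) / ln (real n) \<le> enn2real (Ke (real D * real n)) / ln (real D * real n) * (ln (real D * real n) / ln (real n))"
        using lpos by (simp add: divide_right_mono)
    qed
  qed
  then show ?thesis by (simp add: I_def c_def D_def)
qed

end


theorem theorem2p3:
  fixes Q :: "real measure" and \<alpha> \<beta> s :: real
    and M :: "nat \<Rightarrow> 'w measure" and X :: "nat \<Rightarrow> 'w \<Rightarrow> ((real^'d) \<times> real) set"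
  assumes d2: "CARD('d) \<ge> 2"
    and Qprob: "prob_space Q" and Qsets: "sets Q = sets borel"
    and Qnonneg: "emeasure Q {..<0} = 0"
    and Qac: "absolutely_continuous lborel Q"
    and \<beta>pos: "\<beta> > 0" and spos: "s > 0"
    and tail: "((\<lambda>h. h powr s * measure Q {h<..}) \<longlongrightarrow> \<beta>) at_top"
    and \<alpha>pos: "\<alpha> > 0"
    and PPP: "\<And>n. n \<ge> 1 \<Longrightarrow> poisson_process (M n) (X n) (torus_leb n \<Otimes>\<^sub>M Q)"
  shows
   "(s > \<alpha> + CARD('d) \<longrightarrow>
      (\<lambda>n. \<integral>\<omega>. D_in \<alpha> n (X n \<omega>) \<partial>M n) \<longlonglongrightarrow>
        CARD('d) * measure lborel (ball (0::real^'d) 1) / (\<alpha> + CARD('d))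
          * (\<integral>r. r powr (\<alpha> + CARD('d)) \<partial>Q)) \<and>
    (s = \<alpha> + CARD('d) \<longrightarrow>
      (\<lambda>n. (\<integral>\<omega>. D_in \<alpha> n (X n \<omega>) \<partial>M n) / ln (real n)) \<longlonglongrightarrow>
        CARD('d) * measure lborel (ball (0::real^'d) 1) * \<beta>) \<and>
    (s < \<alpha> + CARD('d) \<longrightarrow>
      (\<lambda>n. real n powr (s - \<alpha> - CARD('d)) * (\<integral>\<omega>. D_in \<alpha> n (X n \<omega>) \<partial>M n)) \<longlonglongrightarrow>
        \<beta> * (\<integral>\<eta>. norm \<eta> powr (\<alpha> - s)
                 \<partial>(restrict_space lborel (cbox (\<chi> i. - 1 / 2) (\<chi> i. 1 / 2) :: (real^'d) set))))"
proof -
  interpret T: tailQ Q \<alpha> \<beta> s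
    unfolding tailQ_def using Qprob Qsets Qnonneg Qac \<beta>pos spos tail \<alpha>pos by blast
  have E: "(\<integral>\<omega>. D_in \<alpha> n (X n \<omega>) \<partial>M n) = enn2real (\<integral>\<^sup>+ x. indicator (torus_box n :: (real^'d) set) x * ennreal (norm x powr \<alpha> * measure Q {norm x..}) \<partial>lborel)"
    if n: "n \<ge> 1" for n
    by (rule expect_D[OF Qprob Qsets PPP[OF n]])
  have ball: "measure lborel (ball (0::real^'d) 1) = unit_ball_vol (real CARD('d))"
    using content_ball[of 1 "0::real^'d"] by simp
  show ?thesis
  proof (intro conjI impI)
    assume sD: "s > \<alpha> + CARD('d)"
    have "eventually (\<lambda>n. enn2real (\<integral>\<^sup>+ x. indicator (torus_box n :: (real^'d) set) x * ennreal (norm x powr \<alpha> * measure Q {norm x..}) \<partial>lborel) = (\<integral>\<omega>. D_in \<alpha> n (X n \<omega>) \<partial>M n)) sequentially"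
      unfolding eventually_sequentially by (rule exI[of _ 1]) (simp add: E)
    then show "(\<lambda>n. \<integral>\<omega>. D_in \<alpha> n (X n \<omega>) \<partial>M n) \<longlonglongrightarrow>
        CARD('d) * measure lborel (ball (0::real^'d) 1) / (\<alpha> + CARD('d))
          * (\<integral>r. r powr (\<alpha> + CARD('d)) \<partial>Q)"
      using T.part1[OF sD] by (subst (asm) tendsto_cong) (auto simp: ball)
  next
    assume sD: "s = \<alpha> + CARD('d)"
    have "eventually (\<lambda>n. enn2real (\<integral>\<^sup>+ x. indicator (torus_box n :: (real^'d) set) x * ennreal (norm x powr \<alpha> * measure Q {norm x..}) \<partial>lborel) / ln (real n) = (\<integral>\<omega>. D_in \<alpha> n (X n \<omega>) \<partial>M n) / ln (real n)) sequentially"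
      unfolding eventually_sequentially by (rule exI[of _ 1]) (simp add: E)
    then show "(\<lambda>n. (\<integral>\<omega>. D_in \<alpha> n (X n \<omega>) \<partial>M n) / ln (real n)) \<longlonglongrightarrow>
        CARD('d) * measure lborel (ball (0::real^'d) 1) * \<beta>"
      using T.part2[OF sD] by (subst (asm) tendsto_cong) (auto simp: ball)
  next
    assume sD: "s < \<alpha> + CARD('d)"
    have "eventually (\<lambda>n. real n powr (s - \<alpha> - real CARD('d)) * enn2real (\<integral>\<^sup>+ x. indicator (torus_box n :: (real^'d) set) x * ennreal (norm x powr \<alpha> * measure Q {norm x..}) \<partial>lborel) = real n powr (s - \<alpha> - CARD('d)) * (\<integral>\<omega>. D_in \<alpha> n (X n \<omega>) \<partial>M n)) sequentially"
      unfolding eventually_sequentially by (rule exI[of _ 1]) (simp add: E)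
    then show "(\<lambda>n. real n powr (s - \<alpha> - CARD('d)) * (\<integral>\<omega>. D_in \<alpha> n (X n \<omega>) \<partial>M n)) \<longlonglongrightarrow>
        \<beta> * (\<integral>\<eta>. norm \<eta> powr (\<alpha> - s)
                 \<partial>(restrict_space lborel (cbox (\<chi> i. - 1 / 2) (\<chi> i. 1 / 2) :: (real^'d) set)))"
      using T.part3[OF sD] by (subst (asm) tendsto_cong) auto
  qed
qed

end
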